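(* Let $\mathcal K$ denote one of the categories $\mathcal I$ or $\mathcal J$, with degree functor $\lambda(\mathbf k)=|\mathbf k|$ on $\mathcal I$ and $\lambda(\mathbf k_1,\mathbf k_2)=|\mathbf k_1|$ on $\mathcal J$. Suppose that $\mathcal A$ is a normal and multiplicative subcategory of automorphisms in $\mathcal K$ such that the inclusion $\mathcal K_{\mathcal A}\to\mathcal K$ is homotopy cofinal. Then $(\mathcal K,\mathcal A)$ is a well-structured relative index category, and if all objects of $\mathcal A$ have positive degree, then $(\mathcal K,\mathcal A)$ is very well-structured.
   Context: $\mathcal I$: objects $\mathbf n=\{1,\dots,n\}$, morphisms injections, symmetric monoidal under concatenation $\sqcup$ with unit $\mathbf 0$. $\mathcal J$: objects pairs $(\mathbf n_1,\mathbf n_2)$, morphisms $(\beta_1,\beta_2,\sigma)$ with $\beta_i$ injections and $\sigma$ a bijection between the complements of their images, composed by $(\beta_1\alpha_1,\beta_2\alpha_2,\tau)$ with $\tau=\sigma$ on $\mathbf n_1\setminus\beta_1$ and $\tau\beta_1=\beta_2\rho$ on $\mathbf m_1\setminus\alpha_1$; symmetric monoidal under componentwise concatenation with symmetry $(\chi,\chi,\mathrm{id})$. $\mathbb N_0$ is the poset $0\to1\to2\to\cdots$, symmetric monoidal under addition. A subcategory of automorphisms $\mathcal A$ of a small symmetric monoidal category $(\mathcal K,\sqcup,\mathbf 0)$ is a subcategory all of whose morphisms are automorphisms; $\mathcal A(\mathbf k)$ denotes its automorphism group at $\mathbf k$. It is normal if for each isomorphism $\alpha\colon\mathbf k\to\mathbf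 l$ of $\mathcal K$, $\mathbf k\in\mathcal A$ iff $\mathbf l\in\mathcal A$, and then $\gamma\mapsto\alpha\gamma\alpha^{-1}$ is an isomorphism $\mathcal A(\mathbf k)\to\mathcal A(\mathbf l)$; multiplicative if $\sqcup$ restricts to $\mathcal A\times\mathcal A\to\mathcal A$. $\mathcal K_{\mathcal A}$ is the full subcategory of $\mathcal K$ on the objects of $\mathcal A$. A subcategory $\mathcal B\subseteq\mathcal C$ is homotopy cofinal if each comma category $(c\downarrow\mathcal B)$ has contractible classifying space. A well-structured relative index category is $(\mathcal K,\lambda,\mathcal A)$ with $\lambda\colon\mathcal K\to\mathbb N_0$ strong symmetric monoidal and $\mathcal A$ normal multiplicative, such that: (i) a morphism $\mathbf k\to\mathbf l$ is an isomorphism iff $\lambda(\mathbf k)=\lambda(\mathbf l)$; (ii) for $\mathbf k\in\mathcal A$ and any $\mathbf l$, each connected component of the comma category $(\mathbf k\sqcup-\downarrow\mathbf l)$ (objects $(\mathbf n,\alpha\colon\mathbf k\sqcup\mathbf n\to\mathbf l)$) has a terminal object; (iii) for $\mathbf k\in\mathcal A$, the right action of $\mathcal A(\mathbf k)$ on $(\mathbf k\sqcup-\downarrow\mathbf l)$ induces a free action on its set of components; (iv) $\mathcal K_{\mathcal A}\to\mathcal K$ is homotopy cofinal. It is very well-structured if moreover for all $\mathbf k\in\mathcal A$, all $\mathbf l$ and $n\ge1$, the right action of $\Sigma_n\ltimes\mathcal A(\mathbf k)^{\times n}$ on $(\mathbf k^{\sqcup n}\sqcup-\downarrow\mathbf l)$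 (via $(\sigma;f_1,\dots,f_n)\mapsto\sigma_*\circ(f_1\sqcup\cdots\sqcup f_n)$, $\sigma_*$ the symmetry-induced permutation of $\mathbf k^{\sqcup n}$) is free on the set of connected components. *)

theory Defs
  imports "HOL-Analysis.Analysis"
begin

section \<open>Small categories, nerves and classifying spaces\<close>

record ('x,'y) cat =
  cObj :: "'x set"
  cHom :: "'x \<Rightarrow> 'x \<Rightarrow> 'y set"
  cComp :: "'y \<Rightarrow> 'y \<Rightarrow> 'y"   (* cComp g f = g o f *)
  cId :: "'x \<Rightarrow> 'y"

definition nerve :: "('x,'y) cat \<Rightarrow> nat \<Rightarrow> ('x list \<times> 'y list) set" where
  "nerve C n = {(xs, fs). length xs = Suc n \<and> length fs = n \<and> set xs \<subseteq> cObj C \<and>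
      (\<forall>i<n. fs ! i \<in> cHom C (xs ! i) (xs ! Suc i))}"

fun chain_comp :: "('x,'y) cat \<Rightarrow> 'x list \<Rightarrow> 'y list \<Rightarrow> nat \<Rightarrow> nat \<Rightarrow> 'y" where
  "chain_comp C xs fs a 0 = cId C (xs ! a)"
| "chain_comp C xs fs a (Suc d) = cComp C (fs ! (a + d)) (chain_comp C xs fs a d)"

text \<open>Simplicial operator induced by a monotone map theta : [m] -> [n].\<close>
definition nerve_op :: "('x,'y) cat \<Rightarrow> nat \<Rightarrow> (nat \<Rightarrow> nat) \<Rightarrow> ('x list \<times> 'y list) \<Rightarrow> ('x list \<times> 'y list)" where
  "nerve_op C m \<theta> \<sigma> = (case \<sigma> of (xs, fs) \<Rightarrow>
     (map (\<lambda>j. xs ! \<theta> j) [0..<Suc m],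
      map (\<lambda>j. chain_comp C xs fs (\<theta> j) (\<theta> (Suc j) - \<theta> j)) [0..<m]))"

definition std_simplex :: "nat \<Rightarrow> (nat \<Rightarrow> real) set" where
  "std_simplex n = {t. (\<forall>i. 0 \<le> t i) \<and> (\<forall>i>n. t i = 0) \<and> (\<Sum>i\<le>n. t i) = 1}"

definition simplex_push :: "nat \<Rightarrow> (nat \<Rightarrow> nat) \<Rightarrow> (nat \<Rightarrow> real) \<Rightarrow> (nat \<Rightarrow> real)" where
  "simplex_push m \<theta> t = (\<lambda>i. \<Sum>j\<in>{j. j \<le> m \<and> \<theta> j = i}. t j)"

definition monotone_map :: "nat \<Rightarrow> nat \<Rightarrow> (nat \<Rightarrow> nat) \<Rightarrow> bool" where
  "monotone_map m n \<theta> \<longleftrightarrow> (\<forall>j\<le>m. \<theta> j \<le> n) \<and> (\<forall>i j. i \<le> j \<and> j \<le> m \<longrightarrow> \<theta> i \<le> \<theta> j)"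

definition real_points :: "('x,'y) cat \<Rightarrow> (('x list \<times> 'y list) \<times> (nat \<Rightarrow> real)) set" where
  "real_points C = {(\<sigma>, t). \<exists>n. \<sigma> \<in> nerve C n \<and> t \<in> std_simplex n}"

definition real_rel :: "('x,'y) cat \<Rightarrow> (('x list \<times> 'y list) \<times> (nat \<Rightarrow> real)) \<Rightarrow> (('x list \<times> 'y list) \<times> (nat \<Rightarrow> real)) \<Rightarrow> bool" where
  "real_rel C p q \<longleftrightarrow> (\<exists>m n \<theta> \<sigma> t. \<sigma> \<in> nerve C n \<and> monotone_map m n \<theta> \<and> t \<in> std_simplex m \<and>
       p = (nerve_op C m \<theta> \<sigma>, t) \<and> q = (\<sigma>, simplex_push m \<theta> t))"

definition real_class :: "('x,'y) cat \<Rightarrow> (('x list \<times> 'y list) \<times> (nat \<Rightarrow> real)) \<Rightarrow> (('x list \<times> 'y list) \<times> (nat \<Rightarrow> real)) set" where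
  "real_class C p = {q. equivclp (real_rel C) p q}"

text \<open>Classifying space |N C|: quotient of the disjoint union of simplices, with the weak topology.\<close>
definition classifying_space :: "('x,'y) cat \<Rightarrow> (('x list \<times> 'y list) \<times> (nat \<Rightarrow> real)) set topology" where
  "classifying_space C = topology (\<lambda>V. V \<subseteq> real_class C ` real_points C \<and>
     (\<forall>n. \<forall>\<sigma>\<in>nerve C n. openin (top_of_set (std_simplex n)) {t \<in> std_simplex n. real_class C (\<sigma>, t) \<in> V}))"

definition contractible_cat :: "('x,'y) cat \<Rightarrow> bool" where
  "contractible_cat C \<longleftrightarrow> topspace (classifying_space C) \<noteq> {} \<and> contractible_space (classifying_space C)"

section \<open>Small symmetric monoidal categories with degree functor\<close>

record ('o,'m) smcat =
  Obj :: "'o set"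
  Hom :: "'o \<Rightarrow> 'o \<Rightarrow> 'm set"
  Comp :: "'m \<Rightarrow> 'm \<Rightarrow> 'm"
  Id :: "'o \<Rightarrow> 'm"
  Tens :: "'o \<Rightarrow> 'o \<Rightarrow> 'o"
  TensM :: "'m \<Rightarrow> 'm \<Rightarrow> 'm"
  Unit :: 'o
  Deg :: "'o \<Rightarrow> nat"
  BlockPerm :: "'o \<Rightarrow> nat \<Rightarrow> (nat \<Rightarrow> nat) \<Rightarrow> 'm"
    (* symmetry-induced permutation sigma_* of k^{\<sqcup>n} *)

definition is_iso :: "('o,'m) smcat \<Rightarrow> 'o \<Rightarrow> 'o \<Rightarrow> 'm \<Rightarrow> bool" where
  "is_iso K k l f \<longleftrightarrow> f \<in> Hom K k l \<and> (\<exists>g\<in>Hom K l k. Comp K g f = Id K k \<and> Comp K f g = Id K l)"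

definition iso_inv :: "('o,'m) smcat \<Rightarrow> 'o \<Rightarrow> 'o \<Rightarrow> 'm \<Rightarrow> 'm" where
  "iso_inv K k l f = (THE g. g \<in> Hom K l k \<and> Comp K g f = Id K k \<and> Comp K f g = Id K l)"

fun tpow :: "('o,'m) smcat \<Rightarrow> 'o \<Rightarrow> nat \<Rightarrow> 'o" where
  "tpow K k 0 = Unit K"
| "tpow K k (Suc n) = Tens K (tpow K k n) k"

fun tpowM :: "('o,'m) smcat \<Rightarrow> (nat \<Rightarrow> 'm) \<Rightarrow> nat \<Rightarrow> 'm" where
  "tpowM K fs 0 = Id K (Unit K)"
| "tpowM K fs (Suc n) = TensM K (tpowM K fs n) (fs n)"

section \<open>The categories I and J\<close>

definition inj_maps :: "nat \<Rightarrow> nat \<Rightarrow> (nat \<Rightarrow> nat) set" where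
  "inj_maps m n = {f. inj_on f {..<m} \<and> f ` {..<m} \<subseteq> {..<n} \<and> (\<forall>i\<ge>m. f i = 0)}"

definition inj_comp :: "nat \<Rightarrow> (nat \<Rightarrow> nat) \<Rightarrow> (nat \<Rightarrow> nat) \<Rightarrow> (nat \<Rightarrow> nat)" where
  "inj_comp l g f = (\<lambda>i. if i < l then g (f i) else 0)"

definition inj_id :: "nat \<Rightarrow> (nat \<Rightarrow> nat)" where
  "inj_id n = (\<lambda>i. if i < n then i else 0)"

definition inj_tens :: "nat \<Rightarrow> nat \<Rightarrow> nat \<Rightarrow> (nat \<Rightarrow> nat) \<Rightarrow> (nat \<Rightarrow> nat) \<Rightarrow> (nat \<Rightarrow> nat)" where
  "inj_tens m m' n f g = (\<lambda>i. if i < m then f i else if i < m + m' then n + g (i - m) else 0)"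

definition block_perm :: "nat \<Rightarrow> nat \<Rightarrow> (nat \<Rightarrow> nat) \<Rightarrow> (nat \<Rightarrow> nat)" where
  "block_perm k n \<sigma> = (\<lambda>i. if i < n * k then \<sigma> (i div k) * k + i mod k else 0)"

type_synonym Imor = "nat \<times> nat \<times> (nat \<Rightarrow> nat)"

definition Icat :: "(nat, Imor) smcat" where
  "Icat = \<lparr> Obj = UNIV,
     Hom = (\<lambda>m n. {(m, n, f) | f. f \<in> inj_maps m n}),
     Comp = (\<lambda>(b, c, g) (a, b', f). (a, c, inj_comp a g f)),
     Id = (\<lambda>n. (n, n, inj_id n)),
     Tens = (+),
     TensM = (\<lambda>(a, b, f) (c, d, g). (a + c, b + d, inj_tens a c b f g)),
     Unit = 0,
     Deg = (\<lambda>n. n),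
     BlockPerm = (\<lambda>k n \<sigma>. (n * k, n * k, block_perm k n \<sigma>)) \<rparr>"

type_synonym Jobj = "nat \<times> nat"
type_synonym Jmor = "Jobj \<times> Jobj \<times> (nat \<Rightarrow> nat) \<times> (nat \<Rightarrow> nat) \<times> (nat \<Rightarrow> nat)"

definition compl :: "nat \<Rightarrow> nat \<Rightarrow> (nat \<Rightarrow> nat) \<Rightarrow> nat set" where
  "compl m n f = {..<n} - f ` {..<m}"

definition Jhom :: "Jobj \<Rightarrow> Jobj \<Rightarrow> Jmor set" where
  "Jhom = (\<lambda>(m1, m2) (n1, n2). {((m1, m2), (n1, n2), b1, b2, s) | b1 b2 s.
      b1 \<in> inj_maps m1 n1 \<and> b2 \<in> inj_maps m2 n2 \<and>
      bij_betw s (compl m1 n1 b1) (compl m2 n2 b2) \<and> (\<forall>i. i \<notin> compl m1 n1 b1 \<longrightarrow> s i = 0)})"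

definition Jcomp :: "Jmor \<Rightarrow> Jmor \<Rightarrow> Jmor" where
  "Jcomp = (\<lambda>((m1, m2), (n1, n2), b1, b2, s) ((l1, l2), _, a1, a2, r).
     ((l1, l2), (n1, n2), inj_comp l1 b1 a1, inj_comp l2 b2 a2,
      (\<lambda>i. if i \<in> compl m1 n1 b1 then s i
           else if (\<exists>x. x \<in> compl l1 m1 a1 \<and> b1 x = i)
             then b2 (r (THE x. x < m1 \<and> b1 x = i)) else 0)))"

definition Jtensm :: "Jmor \<Rightarrow> Jmor \<Rightarrow> Jmor" where
  "Jtensm = (\<lambda>((m1, m2), (n1, n2), b1, b2, s) ((m1', m2'), (n1', n2'), b1', b2', s').
     ((m1 + m1', m2 + m2'), (n1 + n1', n2 + n2'),
      inj_tens m1 m1' n1 b1 b1', inj_tens m2 m2' n2 b2 b2',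
      (\<lambda>i. if i < n1 then s i
           else if i - n1 \<in> compl m1' n1' b1' then n2 + s' (i - n1) else 0)))"

definition Jcat :: "(Jobj, Jmor) smcat" where
  "Jcat = \<lparr> Obj = UNIV,
     Hom = Jhom,
     Comp = Jcomp,
     Id = (\<lambda>(n1, n2). ((n1, n2), (n1, n2), inj_id n1, inj_id n2, \<lambda>_. 0)),
     Tens = (\<lambda>(a1, a2) (b1, b2). (a1 + b1, a2 + b2)),
     TensM = Jtensm,
     Unit = (0, 0),
     Deg = fst,
     BlockPerm = (\<lambda>(k1, k2) n \<sigma>. ((n * k1, n * k2), (n * k1, n * k2),
                    block_perm k1 n \<sigma>, block_perm k2 n \<sigma>, \<lambda>_. 0)) \<rparr>"

section \<open>Subcategories of automorphisms\<close>

text \<open>A subcategory of automorphisms is given by its object set AO and its automorphism groups AM k.\<close>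
definition subcat_aut :: "('o,'m) smcat \<Rightarrow> 'o set \<Rightarrow> ('o \<Rightarrow> 'm set) \<Rightarrow> bool" where
  "subcat_aut K AO AM \<longleftrightarrow> AO \<subseteq> Obj K \<and> (\<forall>k. k \<notin> AO \<longrightarrow> AM k = {}) \<and>
     (\<forall>k\<in>AO. Id K k \<in> AM k \<and> (\<forall>g\<in>AM k. is_iso K k k g) \<and>
        (\<forall>g\<in>AM k. \<forall>h\<in>AM k. Comp K g h \<in> AM k))"

definition normal_sub :: "('o,'m) smcat \<Rightarrow> 'o set \<Rightarrow> ('o \<Rightarrow> 'm set) \<Rightarrow> bool" where
  "normal_sub K AO AM \<longleftrightarrow> (\<forall>k\<in>Obj K. \<forall>l\<in>Obj K. \<forall>\<alpha>. is_iso K k l \<alpha> \<longrightarrow>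
      (k \<in> AO \<longleftrightarrow> l \<in> AO) \<and>
      (k \<in> AO \<longrightarrow> bij_betw (\<lambda>\<gamma>. Comp K (Comp K \<alpha> \<gamma>) (iso_inv K k l \<alpha>)) (AM k) (AM l)))"

definition multiplicative :: "('o,'m) smcat \<Rightarrow> 'o set \<Rightarrow> ('o \<Rightarrow> 'm set) \<Rightarrow> bool" where
  "multiplicative K AO AM \<longleftrightarrow> (\<forall>k\<in>AO. \<forall>l\<in>AO. Tens K k l \<in> AO \<and>
      (\<forall>f\<in>AM k. \<forall>g\<in>AM l. TensM K f g \<in> AM (Tens K k l)))"

text \<open>The comma category (c | K_A), K_A the full subcategory on the objects of A.\<close>
definition under_full :: "('o,'m) smcat \<Rightarrow> 'o set \<Rightarrow> 'o \<Rightarrow> ('o \<times> 'm, 'm) cat" where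
  "under_full K AO c = \<lparr> cObj = {(b, f). b \<in> AO \<and> f \<in> Hom K c b},
     cHom = (\<lambda>(b, f) (b', f'). {g \<in> Hom K b b'. Comp K g f = f'}),
     cComp = Comp K,
     cId = (\<lambda>(b, f). Id K b) \<rparr>"

definition hocofinal :: "('o,'m) smcat \<Rightarrow> 'o set \<Rightarrow> bool" where
  "hocofinal K AO \<longleftrightarrow> (\<forall>c\<in>Obj K. contractible_cat (under_full K AO c))"

section \<open>The comma categories (k \<sqcup> - | l)\<close>

definition tobj :: "('o,'m) smcat \<Rightarrow> 'o \<Rightarrow> 'o \<Rightarrow> ('o \<times> 'm) set" where
  "tobj K k l = {(n, \<alpha>). n \<in> Obj K \<and> \<alpha> \<in> Hom K (Tens K k n) l}"

definition tmor :: "('o,'m) smcat \<Rightarrow> 'o \<Rightarrow> ('o \<times> 'm) \<Rightarrow> ('o \<times> 'm) \<Rightarrow> 'm \<Rightarrow> bool" where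
  "tmor K k x y g \<longleftrightarrow> (case x of (n, \<alpha>) \<Rightarrow> case y of (n', \<alpha>') \<Rightarrow>
      g \<in> Hom K n n' \<and> Comp K \<alpha>' (TensM K (Id K k) g) = \<alpha>)"

definition tconn :: "('o,'m) smcat \<Rightarrow> 'o \<Rightarrow> 'o \<Rightarrow> ('o \<times> 'm) \<Rightarrow> ('o \<times> 'm) \<Rightarrow> bool" where
  "tconn K k l = equivclp (\<lambda>x y. x \<in> tobj K k l \<and> y \<in> tobj K k l \<and> (\<exists>g. tmor K k x y g))"

definition tact :: "('o,'m) smcat \<Rightarrow> 'm \<Rightarrow> ('o \<times> 'm) \<Rightarrow> ('o \<times> 'm)" where
  "tact K \<gamma> x = (case x of (n, \<alpha>) \<Rightarrow> (n, Comp K \<alpha> (TensM K \<gamma> (Id K n))))"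

definition components_terminal :: "('o,'m) smcat \<Rightarrow> 'o \<Rightarrow> 'o \<Rightarrow> bool" where
  "components_terminal K k l \<longleftrightarrow> (\<forall>x\<in>tobj K k l. \<exists>t\<in>tobj K k l. tconn K k l x t \<and>
      (\<forall>y\<in>tobj K k l. tconn K k l x y \<longrightarrow> (\<exists>!g. tmor K k y t g)))"

definition free_on_components :: "('o,'m) smcat \<Rightarrow> 'o set \<Rightarrow> ('o \<Rightarrow> 'm set) \<Rightarrow> 'o \<Rightarrow> 'o \<Rightarrow> bool" where
  "free_on_components K AO AM k l \<longleftrightarrow> (\<forall>x\<in>tobj K k l. \<forall>\<gamma>\<in>AM k.
      tconn K k l x (tact K \<gamma> x) \<longrightarrow> \<gamma> = Id K k)"

section \<open>(Very) well-structured relative index categories\<close>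

definition well_structured :: "('o,'m) smcat \<Rightarrow> 'o set \<Rightarrow> ('o \<Rightarrow> 'm set) \<Rightarrow> bool" where
  "well_structured K AO AM \<longleftrightarrow>
     \<comment> \<open>lambda is a strong symmetric monoidal functor to N_0\<close>
     (\<forall>k\<in>Obj K. \<forall>l\<in>Obj K. Hom K k l \<noteq> {} \<longrightarrow> Deg K k \<le> Deg K l) \<and>
     (\<forall>k\<in>Obj K. \<forall>l\<in>Obj K. Deg K (Tens K k l) = Deg K k + Deg K l) \<and> Deg K (Unit K) = 0 \<and>
     \<comment> \<open>A is a normal multiplicative subcategory of automorphisms\<close>
     subcat_aut K AO AM \<and> normal_sub K AO AM \<and> multiplicative K AO AM \<and>
     \<comment> \<open>(i)\<close>
     (\<forall>k\<in>Obj K. \<forall>l\<in>Obj K. \<forall>f\<in>Hom K k l. is_iso K k l f \<longleftrightarrow> Deg K k = Deg K l) \<and>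
     \<comment> \<open>(ii)\<close>
     (\<forall>k\<in>AO. \<forall>l\<in>Obj K. components_terminal K k l) \<and>
     \<comment> \<open>(iii)\<close>
     (\<forall>k\<in>AO. \<forall>l\<in>Obj K. free_on_components K AO AM k l) \<and>
     \<comment> \<open>(iv)\<close>
     hocofinal K AO"

text \<open>Action of (sigma; f_1..f_n) in Sigma_n \<ltimes> A(k)^n via sigma_* o (f_1 \<sqcup> ... \<sqcup> f_n).\<close>
definition very_well_structured :: "('o,'m) smcat \<Rightarrow> 'o set \<Rightarrow> ('o \<Rightarrow> 'm set) \<Rightarrow> bool" where
  "very_well_structured K AO AM \<longleftrightarrow> well_structured K AO AM \<and>
     (\<forall>k\<in>AO. \<forall>l\<in>Obj K. \<forall>n\<ge>1. \<forall>\<sigma> fs. \<sigma> permutes {..<n} \<and> (\<forall>i<n. fs i \<in> AM k) \<longrightarrow>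
        (\<forall>x\<in>tobj K (tpow K k n) l.
           tconn K (tpow K k n) l x (tact K (Comp K (BlockPerm K k n \<sigma>) (tpowM K fs n)) x) \<longrightarrow>
           \<sigma> = id \<and> (\<forall>i<n. fs i = Id K k)))"

end

theory Submission
  imports Defs
begin

lemma equivclp_inv:
  assumes "\<And>x y. R x y \<Longrightarrow> h x = h y" and "equivclp R x y"
  shows "h x = h y"
  using assms(2) by (induction rule: equivclp_induct) (auto dest: assms(1))

lemma extend_bij:
  fixes f :: "nat \<Rightarrow> nat"
  assumes inj: "inj_on f {..<k}" and im: "f ` {..<k} \<subseteq> {..<l}" and kl: "k \<le> l"
  obtains \<tau> where "bij_betw \<tau> {..<l} {..<l}" "\<forall>i<k. \<tau> i = f i" "\<forall>i. l \<le> i \<longrightarrow> \<tau> i = 0"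
proof -
  have c: "card ({..<l} - f ` {..<k}) = card {k..<l}"
    using inj im kl by (simp add: card_Diff_subset card_image)
  obtain h where h: "bij_betw h {k..<l} ({..<l} - f ` {..<k})"
    using finite_same_card_bij[of "{k..<l}" "{..<l} - f ` {..<k}"] c by auto
  define \<tau> where "\<tau> i = (if i < k then f i else if i < l then h i else 0)" for i
  have b1: "bij_betw \<tau> {..<k} (f ` {..<k})"
    using inj unfolding bij_betw_def \<tau>_def by (auto simp: inj_on_def)
  have b2: "bij_betw \<tau> {k..<l} ({..<l} - f ` {..<k})"
    using h by (rule bij_betw_cong[THEN iffD1, rotated]) (auto simp: \<tau>_def)
  have "bij_betw \<tau> ({..<k} \<union> {k..<l}) (f ` {..<k} \<union> ({..<l} - f ` {..<k}))"
    by (rule bij_betw_combine[OF b1 b2]) auto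
  moreover have "{..<k} \<union> {k..<l} = {..<l}" using kl by auto
  moreover have "f ` {..<k} \<union> ({..<l} - f ` {..<k}) = {..<l}" using im by auto
  ultimately show ?thesis using that[of \<tau>] kl by (auto simp: \<tau>_def)
qed


section \<open>Category I\<close>

lemma Icat_simps[simp]:
  "Obj Icat = UNIV" "Hom Icat m n = {(m,n,f)|f. f \<in> inj_maps m n}"
  "Comp Icat (b,c,g) (a,b',f) = (a,c,inj_comp a g f)" "Id Icat n = (n,n,inj_id n)"
  "Tens Icat = (+)" "TensM Icat (a,b,f) (c,d,g') = (a+c, b+d, inj_tens a c b f g')"
  "Unit Icat = 0" "Deg Icat = (\<lambda>n. n)" "BlockPerm Icat k n \<sigma> = (n*k, n*k, block_perm k n \<sigma>)"
  by (simp_all add: Icat_def)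

definition restrI :: "nat \<Rightarrow> nat \<times> Imor \<Rightarrow> (nat \<Rightarrow> nat)" where
  "restrI k x = (\<lambda>i. if i < k then snd (snd (snd x)) i else 0)"

lemma tmorI_inv: "tmor Icat k x y g \<Longrightarrow> restrI k x = restrI k y"
  by (cases x; cases y; auto simp: tmor_def restrI_def inj_comp_def inj_tens_def inj_id_def)

lemma tconnI_inv: "tconn Icat k l x y \<Longrightarrow> restrI k x = restrI k y"
  unfolding tconn_def by (erule equivclp_inv[rotated]) (auto dest: tmorI_inv)

lemma tobjI: "x \<in> tobj Icat k l \<longleftrightarrow> (\<exists>n f. x = (n, (k+n, l, f)) \<and> f \<in> inj_maps (k+n) l)"
  by (cases x) (auto simp: tobj_def)

lemma inj_maps_le: "f \<in> inj_maps m n \<Longrightarrow> m \<le> n"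
  unfolding inj_maps_def using card_inj_on_le[of f "{..<m}" "{..<n}"] by auto

lemma tactI: "restrI k (tact Icat (k,k,c) (n,(a,b,f))) = (\<lambda>i. if i < k then f (c i) else 0)"
  by (auto simp: tact_def restrI_def inj_comp_def inj_tens_def)

lemma freeI:
  assumes "(k,k,c) \<in> Hom Icat k k" "x \<in> tobj Icat k l" "tconn Icat k l x (tact Icat (k,k,c) x)"
  shows "(k,k,c) = Id Icat k"
proof -
  obtain n f where x: "x = (n, (k+n, l, f))" "f \<in> inj_maps (k+n) l" using assms(2) tobjI by blast
  have c: "c \<in> inj_maps k k" using assms(1) by auto
  have eq: "restrI k x = restrI k (tact Icat (k,k,c) x)" using tconnI_inv[OF assms(3)] .
  have "c i = i" if "i < k" for i
  proof -
    have h1: "restrI k (tact Icat (k,k,c) x) i = f (c i)" using x(1) that by (simp only: tactI) simp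
    have h2: "restrI k x i = f i" using x that by (simp add: restrI_def)
    have "f (c i) = f i" using h1 h2 eq by simp
    moreover have "c i < k" using c that by (auto simp: inj_maps_def)
    ultimately show ?thesis using x(2) that unfolding inj_maps_def inj_on_def by auto
  qed
  hence "c = inj_id k" using c by (auto simp: inj_id_def inj_maps_def)
  thus ?thesis by simp
qed


lemma bij_tinv:
  assumes "bij_betw \<tau> {..<l} {..<l}"
  shows "\<And>y. y < l \<Longrightarrow> \<tau> (the_inv_into {..<l} \<tau> y) = y"
    "\<And>y. y < l \<Longrightarrow> the_inv_into {..<l} \<tau> y < l"
    "\<And>x. x < l \<Longrightarrow> the_inv_into {..<l} \<tau> (\<tau> x) = x"
    "\<And>x. x < l \<Longrightarrow> \<tau> x < l"
    "\<And>x y. x < l \<Longrightarrow> y < l \<Longrightarrow> \<tau> x = \<tau> y \<longleftrightarrow> x = y"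
  using assms
  apply (auto simp: bij_betw_def f_the_inv_into_f the_inv_into_f_f inj_on_def)
  by (metis assms bij_betw_def lessThan_iff subsetI the_inv_into_into)

lemma I_term_morph:
  assumes bt: "bij_betw \<tau> {..<l} {..<l}" and t0: "\<forall>i\<ge>l. \<tau> i = 0" and kl: "k \<le> l"
    and b: "\<beta> \<in> inj_maps (k+n) l" and bt2: "\<forall>i<k. \<beta> i = \<tau> i"
  shows "\<exists>!g. tmor Icat k (n,(k+n,l,\<beta>)) (l-k,(k+(l-k),l,\<tau>)) g"
proof -
  define ti where "ti = the_inv_into {..<l} \<tau>"
  note T = bij_tinv[OF bt, folded ti_def]
  have binj: "inj_on \<beta> {..<k+n}" and bl: "\<And>i. i < k+n \<Longrightarrow> \<beta> i < l" and b0: "\<And>i. i \<ge> k+n \<Longrightarrow> \<beta> i = 0"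
    using b by (auto simp: inj_maps_def)
  have ge: "k \<le> ti (\<beta> i)" if "k \<le> i" "i < k+n" for i
  proof (rule ccontr)
    assume "\<not> k \<le> ti (\<beta> i)"
    hence "\<beta> (ti (\<beta> i)) = \<tau> (ti (\<beta> i))" using bt2 by auto
    also have "\<dots> = \<beta> i" using T(1) bl that by auto
    finally have "ti (\<beta> i) = i" using binj that \<open>\<not> k \<le> ti (\<beta> i)\<close> unfolding inj_on_def by auto
    thus False using that \<open>\<not> k \<le> ti (\<beta> i)\<close> by auto
  qed
  have key: "tmor Icat k (n,(k+n,l,\<beta>)) (l-k,(k+(l-k),l,\<tau>)) g \<longleftrightarrow>
      (\<exists>h. g = (n, l-k, h) \<and> h \<in> inj_maps n (l-k) \<and> inj_comp (k+n) \<tau> (inj_tens k n k (inj_id k) h) = \<beta>)" for g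
    by (cases g) (auto simp: tmor_def)
  define h where "h j = (if j < n then ti (\<beta> (k+j)) - k else 0)" for j
  have hinj: "h \<in> inj_maps n (l-k)"
  proof -
    have "inj_on h {..<n}"
    proof (rule inj_onI)
      fix x y assume xy: "x \<in> {..<n}" "y \<in> {..<n}" "h x = h y"
      hence "ti (\<beta> (k+x)) = ti (\<beta> (k+y))" using ge[of "k+x"] ge[of "k+y"] by (auto simp: h_def)
      hence "\<beta> (k+x) = \<beta> (k+y)" using T(1) bl xy by (metis add_less_cancel_left lessThan_iff)
      hence "k + x = k + y" using inj_onD[OF binj, of "k+x" "k+y"] xy by simp
      thus "x = y" by simp
    qed
    moreover have "h j < l - k" if "j < n" for j
    proof -
      have "ti (\<beta> (k+j)) < l" using T(2) bl that by simp
      moreover have "k \<le> ti (\<beta> (k+j))" using ge[of "k+j"] that by simp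
      ultimately show ?thesis using that by (simp add: h_def)
    qed
    hence "h ` {..<n} \<subseteq> {..<l-k}" by auto
    ultimately show ?thesis by (auto simp: inj_maps_def h_def)
  qed
  have heq: "inj_comp (k+n) \<tau> (inj_tens k n k (inj_id k) h) = \<beta>"
  proof
    fix i show "inj_comp (k+n) \<tau> (inj_tens k n k (inj_id k) h) i = \<beta> i"
    proof (cases "i < k")
      case True thus ?thesis using bt2 by (auto simp: inj_comp_def inj_tens_def inj_id_def)
    next
      case False
      show ?thesis
      proof (cases "i < k+n")
        case True
        have "k + h (i - k) = ti (\<beta> i)" using ge[of i] True False by (auto simp: h_def)
        thus ?thesis using True False T(1) bl by (auto simp: inj_comp_def inj_tens_def)
      next
        case F2: False thus ?thesis using b0 False by (auto simp: inj_comp_def inj_tens_def)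
      qed
    qed
  qed
  have uniq: "h' = h" if "h' \<in> inj_maps n (l-k)" "inj_comp (k+n) \<tau> (inj_tens k n k (inj_id k) h') = \<beta>" for h'
  proof
    fix j show "h' j = h j"
    proof (cases "j < n")
      case True
      have "\<tau> (k + h' j) = \<beta> (k + j)" using fun_cong[OF that(2), of "k+j"] True
        by (auto simp: inj_comp_def inj_tens_def)
      moreover have "k + h' j < l" using that(1) True kl by (auto simp: inj_maps_def)
      ultimately have "k + h' j = ti (\<beta> (k+j))" using T(3) by metis
      thus ?thesis using True by (auto simp: h_def)
    next
      case False thus ?thesis using that(1) by (auto simp: h_def inj_maps_def)
    qed
  qed
  show ?thesis unfolding key using hinj heq uniq by blast
qed

lemma I_ext:
  assumes bt: "bij_betw \<tau> {..<l} {..<l}" and t0: "\<forall>i\<ge>l. \<tau> i = 0" and kl: "k \<le> l"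
    and b: "\<beta> \<in> inj_maps (k+n) l" and bt2: "\<forall>i<k. \<beta> i = \<tau> i"
  shows "\<exists>!h. h \<in> inj_maps n (l-k) \<and> inj_comp (k+n) \<tau> (inj_tens k n k (inj_id k) h) = \<beta>"
proof -
  define ti where "ti = the_inv_into {..<l} \<tau>"
  note T = bij_tinv[OF bt, folded ti_def]
  have binj: "inj_on \<beta> {..<k+n}" and bl: "\<And>i. i < k+n \<Longrightarrow> \<beta> i < l" and b0: "\<And>i. i \<ge> k+n \<Longrightarrow> \<beta> i = 0"
    using b by (auto simp: inj_maps_def)
  have ge: "k \<le> ti (\<beta> i)" if "k \<le> i" "i < k+n" for i
  proof (rule ccontr)
    assume "\<not> k \<le> ti (\<beta> i)"
    hence "\<beta> (ti (\<beta> i)) = \<tau> (ti (\<beta> i))" using bt2 by auto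
    also have "\<dots> = \<beta> i" using T(1) bl that by auto
    finally have "ti (\<beta> i) = i" using binj that \<open>\<not> k \<le> ti (\<beta> i)\<close> unfolding inj_on_def by auto
    thus False using that \<open>\<not> k \<le> ti (\<beta> i)\<close> by auto
  qed
  have key: "tmor Icat k (n,(k+n,l,\<beta>)) (l-k,(k+(l-k),l,\<tau>)) g \<longleftrightarrow>
      (\<exists>h. g = (n, l-k, h) \<and> h \<in> inj_maps n (l-k) \<and> inj_comp (k+n) \<tau> (inj_tens k n k (inj_id k) h) = \<beta>)" for g
    by (cases g) (auto simp: tmor_def)
  define h where "h j = (if j < n then ti (\<beta> (k+j)) - k else 0)" for j
  have hinj: "h \<in> inj_maps n (l-k)"
  proof -
    have "inj_on h {..<n}"
    proof (rule inj_onI)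
      fix x y assume xy: "x \<in> {..<n}" "y \<in> {..<n}" "h x = h y"
      hence "ti (\<beta> (k+x)) = ti (\<beta> (k+y))" using ge[of "k+x"] ge[of "k+y"] by (auto simp: h_def)
      hence "\<beta> (k+x) = \<beta> (k+y)" using T(1) bl xy by (metis add_less_cancel_left lessThan_iff)
      hence "k + x = k + y" using inj_onD[OF binj, of "k+x" "k+y"] xy by simp
      thus "x = y" by simp
    qed
    moreover have "h j < l - k" if "j < n" for j
    proof -
      have "ti (\<beta> (k+j)) < l" using T(2) bl that by simp
      moreover have "k \<le> ti (\<beta> (k+j))" using ge[of "k+j"] that by simp
      ultimately show ?thesis using that by (simp add: h_def)
    qed
    hence "h ` {..<n} \<subseteq> {..<l-k}" by auto
    ultimately show ?thesis by (auto simp: inj_maps_def h_def)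
  qed
  have heq: "inj_comp (k+n) \<tau> (inj_tens k n k (inj_id k) h) = \<beta>"
  proof
    fix i show "inj_comp (k+n) \<tau> (inj_tens k n k (inj_id k) h) i = \<beta> i"
    proof (cases "i < k")
      case True thus ?thesis using bt2 by (auto simp: inj_comp_def inj_tens_def inj_id_def)
    next
      case False
      show ?thesis
      proof (cases "i < k+n")
        case True
        have "k + h (i - k) = ti (\<beta> i)" using ge[of i] True False by (auto simp: h_def)
        thus ?thesis using True False T(1) bl by (auto simp: inj_comp_def inj_tens_def)
      next
        case F2: False thus ?thesis using b0 False by (auto simp: inj_comp_def inj_tens_def)
      qed
    qed
  qed
  have uniq: "h' = h" if "h' \<in> inj_maps n (l-k)" "inj_comp (k+n) \<tau> (inj_tens k n k (inj_id k) h') = \<beta>" for h'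
  proof
    fix j show "h' j = h j"
    proof (cases "j < n")
      case True
      have "\<tau> (k + h' j) = \<beta> (k + j)" using fun_cong[OF that(2), of "k+j"] True
        by (auto simp: inj_comp_def inj_tens_def)
      moreover have "k + h' j < l" using that(1) True kl by (auto simp: inj_maps_def)
      ultimately have "k + h' j = ti (\<beta> (k+j))" using T(3) by metis
      thus ?thesis using True by (auto simp: h_def)
    next
      case False thus ?thesis using that(1) by (auto simp: h_def inj_maps_def)
    qed
  qed
  show ?thesis using hinj heq uniq by blast
qed


lemma bij_inj_maps: "bij_betw \<tau> {..<l} {..<l} \<Longrightarrow> \<forall>i\<ge>l. \<tau> i = 0 \<Longrightarrow> \<tau> \<in> inj_maps l l"
  by (auto simp: inj_maps_def bij_betw_def)

lemma termI: "components_terminal Icat k l"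
  unfolding components_terminal_def
proof
  fix x assume "x \<in> tobj Icat k l"
  then obtain n f where x: "x = (n, (k+n, l, f))" "f \<in> inj_maps (k+n) l" using tobjI by blast
  have kl: "k \<le> l" using inj_maps_le[OF x(2)] by simp
  have "inj_on f {..<k}" using x(2) by (auto simp: inj_maps_def inj_on_def)
  moreover have "f ` {..<k} \<subseteq> {..<l}"
  proof
    fix y assume "y \<in> f ` {..<k}"
    then obtain i where "i < k" "y = f i" by auto
    moreover have "f ` {..<k+n} \<subseteq> {..<l}" using x(2) unfolding inj_maps_def by blast
    moreover have "i \<in> {..<k+n}" using \<open>i < k\<close> by simp
    ultimately show "y \<in> {..<l}" by blast
  qed
  ultimately obtain \<tau> where t: "bij_betw \<tau> {..<l} {..<l}" "\<forall>i<k. \<tau> i = f i" "\<forall>i. l \<le> i \<longrightarrow> \<tau> i = 0"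
    using extend_bij[of f k l] kl by metis
  define t where "t = (l-k,(k+(l-k),l,\<tau>))"
  have tt: "t \<in> tobj Icat k l"
  proof -
    have "\<tau> \<in> inj_maps (k+(l-k)) l" using bij_inj_maps[OF t(1)] t(3) kl by simp
    thus ?thesis unfolding t_def tobj_def by simp
  qed
  have M: "\<exists>!g. tmor Icat k y t g" if yin: "y \<in> tobj Icat k l" and yr: "restrI k y = restrI k x" for y
  proof -
    obtain n' \<beta> where y: "y = (n', (k+n', l, \<beta>))" "\<beta> \<in> inj_maps (k+n') l"
      using tobjI[THEN iffD1, OF yin] by (elim exE conjE) simp
    have "\<forall>i<k. \<beta> i = \<tau> i"
    proof (intro allI impI)
      fix i assume "i < k"
      thus "\<beta> i = \<tau> i" using fun_cong[OF yr, of i] t(2) x y by (simp add: restrI_def)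
    qed
    hence "\<forall>i<k. \<beta> i = \<tau> i" by simp
    from I_term_morph[OF t(1) _ kl y(2) this] t(3) show ?thesis unfolding t_def y(1) by simp
  qed
  have A: "tconn Icat k l x t"
  proof -
    have "\<exists>!g. tmor Icat k x t g" using M[of x] \<open>x \<in> tobj Icat k l\<close> by simp
    then obtain g where "tmor Icat k x t g" by (rule ex1E)
    thus ?thesis unfolding tconn_def using tt \<open>x \<in> tobj Icat k l\<close> by (intro r_into_equivclp) blast
  qed
  have B: "\<forall>y\<in>tobj Icat k l. tconn Icat k l x y \<longrightarrow> (\<exists>!g. tmor Icat k y t g)"
  proof (intro ballI impI)
    fix y assume "y \<in> tobj Icat k l" "tconn Icat k l x y"
    thus "\<exists>!g. tmor Icat k y t g" using M[of y] tconnI_inv[of k l x y] by simp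
  qed
  show "\<exists>t\<in>tobj Icat k l. tconn Icat k l x t \<and> (\<forall>y\<in>tobj Icat k l. tconn Icat k l x y \<longrightarrow> (\<exists>!g. tmor Icat k y t g))"
    using A B tt by (intro bexI[where x=t] conjI)
qed


lemma inj_maps_bij: "f \<in> inj_maps n n \<Longrightarrow> bij_betw f {..<n} {..<n}"
  unfolding inj_maps_def bij_betw_def using endo_inj_surj[of "{..<n}" f] by auto

lemma inv_inj_maps:
  assumes "f \<in> inj_maps n n"
  defines "g \<equiv> (\<lambda>i. if i < n then the_inv_into {..<n} f i else 0)"
  shows "g \<in> inj_maps n n" "inj_comp n g f = inj_id n" "inj_comp n f g = inj_id n"
proof -
  have b: "bij_betw f {..<n} {..<n}" using inj_maps_bij[OF assms(1)] .
  note T = bij_tinv[OF b]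
  have f0: "\<forall>i\<ge>n. f i = 0" using assms(1) by (auto simp: inj_maps_def)
  have "bij_betw g {..<n} {..<n}"
    using bij_betw_the_inv_into[OF b] by (rule bij_betw_cong[THEN iffD1, rotated]) (auto simp: g_def)
  thus "g \<in> inj_maps n n" by (rule bij_inj_maps) (auto simp: g_def)
  show "inj_comp n g f = inj_id n" using T by (auto simp: inj_comp_def inj_id_def g_def)
  show "inj_comp n f g = inj_id n" using T by (auto simp: inj_comp_def inj_id_def g_def)
qed

lemma isoI: "f \<in> Hom Icat m n \<Longrightarrow> is_iso Icat m n f \<longleftrightarrow> m = n"
proof
  assume "f \<in> Hom Icat m n" "is_iso Icat m n f"
  then obtain g where "g \<in> Hom Icat n m" unfolding is_iso_def by blast
  thus "m = n" using \<open>f \<in> Hom Icat m n\<close> by (auto dest!: inj_maps_le)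
next
  assume "f \<in> Hom Icat m n" "m = n"
  then obtain f' where f: "f = (n,n,f')" "f' \<in> inj_maps n n" by auto
  define g where "g \<equiv> (\<lambda>i. if i < n then the_inv_into {..<n} f' i else 0)"
  note G = inv_inj_maps[OF f(2), folded g_def]
  show "is_iso Icat m n f" unfolding is_iso_def
    using G f \<open>m = n\<close> by (intro conjI bexI[where x="(n,n,g)"]) auto
qed

lemma degI: "Hom Icat m n \<noteq> {} \<Longrightarrow> m \<le> n"
  by (auto dest!: inj_maps_le)


lemma divmod_eq: fixes a b c d k :: nat
  assumes "a*k+b = c*k+d" "b<k" "d<k" shows "a = c" "b = d"
proof -
  have "a = (a*k+b) div k" using assms(2) by simp
  also have "\<dots> = (c*k+d) div k" using assms(1) by simp
  also have "\<dots> = c" using assms(3) by simp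
  finally show "a = c" .
  have "b = (a*k+b) mod k" using assms(2) by simp
  also have "\<dots> = (c*k+d) mod k" using assms(1) by simp
  also have "\<dots> = d" using assms(3) by simp
  finally show "b = d" .
qed

lemma div_mod_blk: fixes q r k :: nat assumes "r < k" shows "(q*k + r) div k = q" "(q*k + r) mod k = r"
  using assms by auto

lemma blk_lt: fixes q r k n :: nat assumes "q < n" "r < k" shows "q*k + r < n*k"
proof -
  have "Suc q * k \<le> n * k" using assms(1) by (intro mult_le_mono1) simp
  thus ?thesis using assms(2) by simp
qed

lemma tpowI: "tpow Icat k n = n*k"
  by (induction n) auto

definition FI :: "nat \<Rightarrow> (nat \<Rightarrow> nat \<Rightarrow> nat) \<Rightarrow> nat \<Rightarrow> nat \<Rightarrow> nat" where
  "FI k c n i = (if i < n*k then c (i div k) (i mod k) + (i div k)*k else 0)"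

lemma FI_Suc: "inj_tens (n*k) k (n*k) (FI k c n) (c n) = FI k c (Suc n)"
proof
  fix i show "inj_tens (n*k) k (n*k) (FI k c n) (c n) i = FI k c (Suc n) i"
  proof (cases "i < n*k")
    case True thus ?thesis by (auto simp: inj_tens_def FI_def)
  next
    case False
    show ?thesis
    proof (cases "i < n*k + k")
      case True
      define r where "r = i - n*k"
      have i: "i = n*k + r" "r < k" using True False by (auto simp: r_def)
      show ?thesis using i False div_mod_blk[OF i(2), of n] by (auto simp: inj_tens_def FI_def)
    next
      case F2: False thus ?thesis using False by (auto simp: inj_tens_def FI_def)
    qed
  qed
qed

lemma tpowMI: "(\<forall>i<n. fs i = (k,k,c i)) \<Longrightarrow> tpowM Icat fs n = (n*k, n*k, FI k c n)"
proof (induction n)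
  case 0 thus ?case by (auto simp: FI_def inj_id_def)
next
  case (Suc n)
  hence IH: "tpowM Icat fs n = (n*k, n*k, FI k c n)" and fn: "fs n = (k,k,c n)" by auto
  have "inj_tens (n*k) k (n*k) (FI k c n) (c n) = FI k c (Suc n)"
  proof
    fix i show "inj_tens (n*k) k (n*k) (FI k c n) (c n) i = FI k c (Suc n) i"
    proof (cases "i < n*k")
      case True thus ?thesis by (auto simp: inj_tens_def FI_def)
    next
      case False
      show ?thesis
      proof (cases "i < n*k + k")
        case True
        define r where "r = i - n*k"
        have i: "i = n*k + r" "r < k" using True False by (auto simp: r_def)
        show ?thesis using i False div_mod_blk[OF i(2), of n] by (auto simp: inj_tens_def FI_def)
      next
        case F2: False thus ?thesis using False by (auto simp: inj_tens_def FI_def)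
      qed
    qed
  qed
  thus ?case using IH fn by simp
qed


lemma blk_core:
  assumes sp: "\<sigma> permutes {..<n}" and c: "\<forall>i<n. c i \<in> inj_maps k k"
    and finj: "inj_on f {..<n*k+m}"
    and eq: "\<forall>i<n*k. f (inj_comp (n*k) (block_perm k n \<sigma>) (FI k c n) i) = f i"
    and q: "q < n" and r: "r < k"
  shows "\<sigma> q = q \<and> c q r = r"
proof -
  define G where "G = inj_comp (n*k) (block_perm k n \<sigma>) (FI k c n)"
  have cl: "c q r < k" if "q < n" "r < k" for q r using c that by (auto simp: inj_maps_def)
  have Gi: "G (q*k+r) = \<sigma> q * k + c q r" if "q < n" "r < k" for q r
  proof -
    have lt: "q*k + r < n*k" using blk_lt[OF that] .
    have "FI k c n (q*k+r) = c q r + q*k" using lt div_mod_blk[OF that(2)] by (simp add: FI_def)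
    moreover have "c q r + q*k < n*k" using blk_lt[OF that(1) cl[OF that]] by simp
    ultimately show ?thesis using lt div_mod_blk[OF cl[OF that], of q] by (simp add: G_def inj_comp_def block_perm_def add.commute)
  qed
  have Glt: "\<sigma> q * k + c q r < n*k" if "q < n" "r < k" for q r
  proof -
    have "\<sigma> q < n" using permutes_in_image[OF sp, of q] that(1) by simp
    thus ?thesis using blk_lt[OF _ cl[OF that]] by simp
  qed
  have lt: "q*k + r < n*k" using blk_lt[OF q r] .
  have "f (G (q*k+r)) = f (q*k+r)" using eq lt by (simp add: G_def)
  moreover have "G (q*k+r) < n*k" using Gi[OF q r] Glt[OF q r] by simp
  ultimately have "G (q*k+r) = q*k+r" using finj lt unfolding inj_on_def by auto
  hence "\<sigma> q * k + c q r = q * k + r" using Gi[OF q r] by simp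
  thus ?thesis using divmod_eq[OF _ cl[OF q r] r] by blast
qed

lemma vwsI:
  assumes k0: "0 < k" and sp: "\<sigma> permutes {..<n}" and c: "\<forall>i<n. c i \<in> inj_maps k k"
    and xt: "x \<in> tobj Icat (n*k) l"
    and tc: "tconn Icat (n*k) l x (tact Icat (n*k, n*k, inj_comp (n*k) (block_perm k n \<sigma>) (FI k c n)) x)"
  shows "\<sigma> = id \<and> (\<forall>i<n. c i = inj_id k)"
proof -
  define G where "G = inj_comp (n*k) (block_perm k n \<sigma>) (FI k c n)"
  obtain m f where x: "x = (m, (n*k+m, l, f))" "f \<in> inj_maps (n*k+m) l" using xt tobjI by blast
  have eq: "restrI (n*k) x = restrI (n*k) (tact Icat (n*k,n*k,G) x)" using tconnI_inv[OF tc[folded G_def]] .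
  have cl: "c q r < k" if "q < n" "r < k" for q r using c that by (auto simp: inj_maps_def)
  have Gi: "G (q*k+r) = \<sigma> q * k + c q r" if "q < n" "r < k" for q r
  proof -
    have lt: "q*k + r < n*k" using blk_lt[OF that] .
    have "FI k c n (q*k+r) = c q r + q*k" using lt div_mod_blk[OF that(2)] by (simp add: FI_def)
    moreover have "c q r + q*k < n*k" using blk_lt[OF that(1) cl[OF that]] by simp
    ultimately show ?thesis using lt div_mod_blk[OF cl[OF that], of q] by (simp add: G_def inj_comp_def block_perm_def add.commute)
  qed
  have Glt: "\<sigma> q * k + c q r < n*k" if "q < n" "r < k" for q r
  proof -
    have "\<sigma> q < n" using permutes_in_image[OF sp, of q] that(1) by simp
    thus ?thesis using blk_lt[OF _ cl[OF that]] by simp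
  qed
  have main: "\<sigma> q = q \<and> c q r = r" if "q < n" "r < k" for q r
  proof -
    have lt: "q*k + r < n*k" using blk_lt[OF that] .
    have h1: "restrI (n*k) (tact Icat (n*k,n*k,G) x) (q*k+r) = f (G (q*k+r))"
      using x(1) lt by (simp only: tactI) simp
    have h2: "restrI (n*k) x (q*k+r) = f (q*k+r)" using x lt by (simp add: restrI_def)
    have "f (G (q*k+r)) = f (q*k+r)" using h1 h2 eq by simp
    moreover have "G (q*k+r) < n*k" using Gi[OF that] Glt[OF that] by simp
    ultimately have "G (q*k+r) = q*k+r" using x(2) lt unfolding inj_maps_def inj_on_def by auto
    hence "\<sigma> q * k + c q r = q * k + r" using Gi[OF that] by simp
    thus ?thesis using divmod_eq[OF _ cl[OF that] that(2)] by blast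
  qed
  have "\<sigma> = id"
  proof
    fix q show "\<sigma> q = id q"
    proof (cases "q < n")
      case True thus ?thesis using main[OF True k0] by simp
    next
      case False thus ?thesis using permutes_not_in[OF sp, of q] by simp
    qed
  qed
  moreover have "c q = inj_id k" if "q < n" for q
  proof
    fix r show "c q r = inj_id k r"
      using main[OF that] c that by (cases "r < k") (auto simp: inj_id_def inj_maps_def)
  qed
  ultimately show ?thesis by blast
qed


lemma AM_Hom: "subcat_aut K AO AM \<Longrightarrow> g \<in> AM k \<Longrightarrow> g \<in> Hom K k k"
  unfolding subcat_aut_def is_iso_def by (cases "k \<in> AO") auto

lemma partI:
  "subcat_aut Icat AO AM \<and> normal_sub Icat AO AM \<and> multiplicative Icat AO AM \<and> hocofinal Icat AO \<longrightarrow>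
   well_structured Icat AO AM \<and> ((\<forall>k\<in>AO. 0 < Deg Icat k) \<longrightarrow> very_well_structured Icat AO AM)"
proof (intro impI)
  assume H: "subcat_aut Icat AO AM \<and> normal_sub Icat AO AM \<and> multiplicative Icat AO AM \<and> hocofinal Icat AO"
  hence sa: "subcat_aut Icat AO AM" by blast
  have free: "free_on_components Icat AO AM k l" for k l
    unfolding free_on_components_def
  proof (intro ballI impI)
    fix x \<gamma> assume "x \<in> tobj Icat k l" "\<gamma> \<in> AM k" "tconn Icat k l x (tact Icat \<gamma> x)"
    moreover obtain c where "\<gamma> = (k,k,c)" "(k,k,c) \<in> Hom Icat k k" using AM_Hom[OF sa \<open>\<gamma> \<in> AM k\<close>] by auto
    ultimately show "\<gamma> = Id Icat k" using freeI by blast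
  qed
  have WS: "well_structured Icat AO AM"
    unfolding well_structured_def using H degI isoI termI free by auto
  moreover have "very_well_structured Icat AO AM" if pos: "\<forall>k\<in>AO. 0 < Deg Icat k"
    unfolding very_well_structured_def
  proof (rule conjI[OF WS], intro ballI allI impI)
    fix k l n \<sigma> fs x
    assume kA: "k \<in> AO" and n1: "1 \<le> n" and sf: "\<sigma> permutes {..<n} \<and> (\<forall>i<n. fs i \<in> AM k)"
      and xt: "x \<in> tobj Icat (tpow Icat k n) l"
      and tc: "tconn Icat (tpow Icat k n) l x (tact Icat (Comp Icat (BlockPerm Icat k n \<sigma>) (tpowM Icat fs n)) x)"
    define c where "c i = snd (snd (fs i))" for i
    have fsi: "fs i = (k,k,c i)" "c i \<in> inj_maps k k" if "i < n" for i
      using AM_Hom[OF sa, of "fs i" k] sf that by (auto simp: c_def)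
    have tp: "tpowM Icat fs n = (n*k, n*k, FI k c n)" using tpowMI[of n fs k c] fsi by blast
    have "\<sigma> = id \<and> (\<forall>i<n. c i = inj_id k)"
      using vwsI[of k \<sigma> n c x l] pos kA sf fsi xt tc by (simp add: tpowI tp)
    thus "\<sigma> = id \<and> (\<forall>i<n. fs i = Id Icat k)" using fsi by simp
  qed
  ultimately show "well_structured Icat AO AM \<and> ((\<forall>k\<in>AO. 0 < Deg Icat k) \<longrightarrow> very_well_structured Icat AO AM)"
    by blast
qed


section \<open>Category J\<close>

lemma Jhom_iff: "x \<in> Jhom (m1,m2) (n1,n2) \<longleftrightarrow> (\<exists>b1 b2 s. x = ((m1,m2),(n1,n2),b1,b2,s) \<and>
      b1 \<in> inj_maps m1 n1 \<and> b2 \<in> inj_maps m2 n2 \<and>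
      bij_betw s (compl m1 n1 b1) (compl m2 n2 b2) \<and> (\<forall>i. i \<notin> compl m1 n1 b1 \<longrightarrow> s i = 0))"
  by (auto simp: Jhom_def)

lemma Jcat_simps[simp]:
  "Obj Jcat = UNIV" "Hom Jcat = Jhom" "Comp Jcat = Jcomp" "Id Jcat (n1,n2) = ((n1,n2),(n1,n2),inj_id n1, inj_id n2, \<lambda>_. 0)"
  "Tens Jcat (a1,a2) (b1,b2) = (a1+b1,a2+b2)" "TensM Jcat = Jtensm" "Unit Jcat = (0,0)" "Deg Jcat = fst"
  "BlockPerm Jcat (k1,k2) n \<sigma> = ((n * k1, n * k2), (n * k1, n * k2), block_perm k1 n \<sigma>, block_perm k2 n \<sigma>, \<lambda>_. 0)"
  by (simp_all add: Jcat_def)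

lemma Jcomp_eq: "Jcomp ((m1, m2), (n1, n2), b1, b2, s) ((l1, l2), y, a1, a2, r) =
     ((l1, l2), (n1, n2), inj_comp l1 b1 a1, inj_comp l2 b2 a2,
      (\<lambda>i. if i \<in> compl m1 n1 b1 then s i
           else if (\<exists>x. x \<in> compl l1 m1 a1 \<and> b1 x = i)
             then b2 (r (THE x. x < m1 \<and> b1 x = i)) else 0))"
  by (simp add: Jcomp_def)

lemma Jtensm_eq: "Jtensm ((m1, m2), (n1, n2), b1, b2, s) ((m1', m2'), (n1', n2'), b1', b2', s') =
     ((m1 + m1', m2 + m2'), (n1 + n1', n2 + n2'),
      inj_tens m1 m1' n1 b1 b1', inj_tens m2 m2' n2 b2 b2',
      (\<lambda>i. if i < n1 then s i
           else if i - n1 \<in> compl m1' n1' b1' then n2 + s' (i - n1) else 0))"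
  by (simp add: Jtensm_def)

definition restrJ :: "Jobj \<Rightarrow> Jobj \<times> Jmor \<Rightarrow> (nat \<Rightarrow> nat) \<times> (nat \<Rightarrow> nat)" where
  "restrJ k x = (case x of (n, (a, b, b1, b2, s)) \<Rightarrow> (\<lambda>i. if i < fst k then b1 i else 0,
                 \<lambda>i. if i < snd k then b2 i else 0))"

lemma tmorJ_inv: "tmor Jcat k x y g \<Longrightarrow> restrJ k x = restrJ k y"
  apply (cases k; cases x; cases y)
  apply (auto simp: tmor_def restrJ_def Jhom_def Jcomp_eq Jtensm_eq inj_comp_def inj_tens_def inj_id_def split: prod.splits)
  done


lemma tconnJ_inv: "tconn Jcat k l x y \<Longrightarrow> restrJ k x = restrJ k y"
  unfolding tconn_def by (erule equivclp_inv[rotated]) (auto dest: tmorJ_inv)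

lemma tobjJ: "x \<in> tobj Jcat (k1,k2) (l1,l2) \<longleftrightarrow> (\<exists>n1 n2 b1 b2 s. x = ((n1,n2), ((k1+n1, k2+n2), (l1,l2), b1,b2,s)) \<and>
      b1 \<in> inj_maps (k1+n1) l1 \<and> b2 \<in> inj_maps (k2+n2) l2 \<and>
      bij_betw s (compl (k1+n1) l1 b1) (compl (k2+n2) l2 b2) \<and> (\<forall>i. i \<notin> compl (k1+n1) l1 b1 \<longrightarrow> s i = 0))"
  by (cases x) (auto simp: tobj_def Jhom_iff)

lemma tactJ: "restrJ (k1,k2) (tact Jcat ((k1,k2),(k1,k2),c1,c2,z) ((n1,n2),((a1,a2),L,b1,b2,s))) =
   (\<lambda>i. if i < k1 then b1 (c1 i) else 0, \<lambda>i. if i < k2 then b2 (c2 i) else 0)"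
  by (cases L) (auto simp: tact_def restrJ_def Jcomp_eq Jtensm_eq inj_comp_def inj_tens_def)

lemma compl_empty: "f \<in> inj_maps n n \<Longrightarrow> compl n n f = {}"
  using inj_maps_bij[of f n] by (auto simp: compl_def bij_betw_def)

lemma inj_fix: assumes "b \<in> inj_maps (k+n) l" "c \<in> inj_maps k k" "\<forall>i<k. b (c i) = b i"
  shows "c = inj_id k"
proof
  fix i show "c i = inj_id k i"
  proof (cases "i < k")
    case True
    have "c i < k" using assms(2) True by (auto simp: inj_maps_def)
    thus ?thesis using assms True unfolding inj_maps_def inj_on_def inj_id_def by auto
  next
    case False thus ?thesis using assms(2) by (auto simp: inj_maps_def inj_id_def)
  qed
qed

lemma freeJ:
  assumes "\<gamma> \<in> Jhom (k1,k2) (k1,k2)" "x \<in> tobj Jcat (k1,k2) l" "tconn Jcat (k1,k2) l x (tact Jcat \<gamma> x)"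
  shows "\<gamma> = Id Jcat (k1,k2)"
proof -
  obtain l1 l2 where l: "l = (l1,l2)" by (cases l)
  obtain n1 n2 b1 b2 s where x: "x = ((n1,n2), ((k1+n1, k2+n2), (l1,l2), b1,b2,s))"
      "b1 \<in> inj_maps (k1+n1) l1" "b2 \<in> inj_maps (k2+n2) l2"
    using assms(2) unfolding l tobjJ by blast
  obtain c1 c2 z where g: "\<gamma> = ((k1,k2),(k1,k2),c1,c2,z)" "c1 \<in> inj_maps k1 k1" "c2 \<in> inj_maps k2 k2"
      "\<forall>i. i \<notin> compl k1 k1 c1 \<longrightarrow> z i = 0"
    using assms(1) unfolding Jhom_iff by blast
  have eq: "restrJ (k1,k2) x = restrJ (k1,k2) (tact Jcat \<gamma> x)" using tconnJ_inv[OF assms(3)] .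
  have e2: "restrJ (k1,k2) (tact Jcat \<gamma> x) = (\<lambda>i. if i < k1 then b1 (c1 i) else 0, \<lambda>i. if i < k2 then b2 (c2 i) else 0)"
    unfolding g(1) x(1) by (rule tactJ)
  have e1: "restrJ (k1,k2) x = (\<lambda>i. if i < k1 then b1 i else 0, \<lambda>i. if i < k2 then b2 i else 0)"
    unfolding x(1) by (simp add: restrJ_def)
  have "\<forall>i<k1. b1 (c1 i) = b1 i"
  proof (intro allI impI)
    fix i assume "i < k1" thus "b1 (c1 i) = b1 i" using fun_cong[OF arg_cong[where f=fst, OF eq[unfolded e1 e2]], of i] by simp
  qed
  hence "c1 = inj_id k1" using inj_fix x(2) g(2) by blast
  moreover have "\<forall>i<k2. b2 (c2 i) = b2 i"
  proof (intro allI impI)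
    fix i assume "i < k2" thus "b2 (c2 i) = b2 i" using fun_cong[OF arg_cong[where f=snd, OF eq[unfolded e1 e2]], of i] by simp
  qed
  hence "c2 = inj_id k2" using inj_fix x(3) g(3) by blast
  moreover have "z = (\<lambda>_. 0)" using g(4) compl_empty[OF g(2)] by auto
  ultimately show ?thesis using g(1) by simp
qed


lemma degJ: "Jhom k l \<noteq> {} \<Longrightarrow> fst k \<le> fst l"
  by (cases k; cases l) (auto simp: Jhom_iff dest!: inj_maps_le)

lemma inj_maps_onto: assumes "b \<in> inj_maps m n" "compl m n b = {}" shows "m = n"
proof -
  have "b ` {..<m} = {..<n}" using assms by (auto simp: inj_maps_def compl_def)
  moreover have "card (b ` {..<m}) = m" using assms(1) by (simp add: inj_maps_def card_image)
  ultimately show ?thesis by simp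
qed

lemma isoJ: assumes "f \<in> Jhom k l" shows "is_iso Jcat k l f \<longleftrightarrow> fst k = fst l"
proof
  assume "is_iso Jcat k l f"
  then obtain g where "g \<in> Jhom l k" unfolding is_iso_def by auto
  thus "fst k = fst l" using degJ[of k l] degJ[of l k] assms by fastforce
next
  assume eq: "fst k = fst l"
  obtain m1 m2 n1 n2 where kl: "k = (m1,m2)" "l = (n1,n2)" by (cases k; cases l)
  obtain b1 b2 s where f: "f = ((m1,m2),(n1,n2),b1,b2,s)" "b1 \<in> inj_maps m1 n1" "b2 \<in> inj_maps m2 n2"
     "bij_betw s (compl m1 n1 b1) (compl m2 n2 b2)" "\<forall>i. i \<notin> compl m1 n1 b1 \<longrightarrow> s i = 0"
    using assms unfolding kl Jhom_iff by blast
  have mn1: "m1 = n1" using eq kl by simp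
  have c1: "compl m1 n1 b1 = {}" using compl_empty f(2) mn1 by simp
  hence "compl m2 n2 b2 = {}" using f(4) by (simp add: bij_betw_def)
  hence mn2: "m2 = n2" using inj_maps_onto f(3) by blast
  have s0: "s = (\<lambda>_. 0)" using f(5) c1 by auto
  define g1 where "g1 \<equiv> (\<lambda>i. if i < m1 then the_inv_into {..<m1} b1 i else 0)"
  define g2 where "g2 \<equiv> (\<lambda>i. if i < m2 then the_inv_into {..<m2} b2 i else 0)"
  note G1 = inv_inj_maps[OF f(2)[folded mn1], folded g1_def]
  note G2 = inv_inj_maps[OF f(3)[folded mn2], folded g2_def]
  define g where "g = ((m1,m2),(m1,m2),g1,g2,(\<lambda>_::nat. 0::nat))"
  have gh: "g \<in> Jhom l k" unfolding g_def kl mn1[symmetric] mn2[symmetric] Jhom_iff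
    using G1(1) G2(1) compl_empty[OF G1(1)] compl_empty[OF G2(1)] by (auto simp: bij_betw_def)
  have C1: "compl m1 m1 g1 = {}" "compl m2 m2 g2 = {}" "compl m1 m1 b1 = {}" "compl m2 m2 b2 = {}"
    using compl_empty G1(1) G2(1) f(2,3) mn1 mn2 by auto
  have "Jcomp g f = Id Jcat k" unfolding g_def f(1) kl mn1[symmetric] mn2[symmetric] s0
    using G1(2) G2(2) C1 by (simp add: Jcomp_eq)
  moreover have "Jcomp f g = Id Jcat l" unfolding g_def f(1) kl mn1[symmetric] mn2[symmetric] s0
    using G1(3) G2(3) C1 by (simp add: Jcomp_eq)
  ultimately show "is_iso Jcat k l f" unfolding is_iso_def using assms gh by auto
qed


lemma compl_L1:
  assumes "h \<in> inj_maps n m"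
  shows "compl (k+n) (k+m) (inj_tens k n k (inj_id k) h) = (\<lambda>j. k+j) ` compl n m h"
proof -
  have im: "inj_tens k n k (inj_id k) h ` {..<k+n} = {..<k} \<union> (\<lambda>j. k + h j) ` {..<n}"
  proof
    show "inj_tens k n k (inj_id k) h ` {..<k+n} \<subseteq> {..<k} \<union> (\<lambda>j. k + h j) ` {..<n}"
    proof
      fix y assume "y \<in> inj_tens k n k (inj_id k) h ` {..<k+n}"
      then obtain i where i: "i < k+n" "y = inj_tens k n k (inj_id k) h i" by auto
      show "y \<in> {..<k} \<union> (\<lambda>j. k + h j) ` {..<n}"
      proof (cases "i < k")
        case True thus ?thesis using i by (simp add: inj_tens_def inj_id_def)
      next
        case False
        hence "y = k + h (i - k)" "i - k < n" using i by (auto simp: inj_tens_def)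
        thus ?thesis by blast
      qed
    qed
    show "{..<k} \<union> (\<lambda>j. k + h j) ` {..<n} \<subseteq> inj_tens k n k (inj_id k) h ` {..<k+n}"
    proof
      fix y assume "y \<in> {..<k} \<union> (\<lambda>j. k + h j) ` {..<n}"
      thus "y \<in> inj_tens k n k (inj_id k) h ` {..<k+n}"
      proof
        assume "y \<in> {..<k}"
        hence "y = inj_tens k n k (inj_id k) h y" "y < k+n" by (auto simp: inj_tens_def inj_id_def)
        thus ?thesis by blast
      next
        assume "y \<in> (\<lambda>j. k + h j) ` {..<n}"
        then obtain j where j: "j < n" "y = k + h j" by auto
        hence "y = inj_tens k n k (inj_id k) h (k+j)" "k + j < k+n" by (auto simp: inj_tens_def)
        thus ?thesis by blast
      qed
    qed
  qed
  show ?thesis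
  proof
    show "compl (k+n) (k+m) (inj_tens k n k (inj_id k) h) \<subseteq> (\<lambda>j. k+j) ` compl n m h"
    proof
      fix x assume x: "x \<in> compl (k+n) (k+m) (inj_tens k n k (inj_id k) h)"
      hence "x < k+m" "x \<notin> {..<k}" "x \<notin> (\<lambda>j. k + h j) ` {..<n}" unfolding compl_def im by auto
      hence "x - k \<in> compl n m h" "x = k + (x - k)" unfolding compl_def by force+
      thus "x \<in> (\<lambda>j. k+j) ` compl n m h" by blast
    qed
    show "(\<lambda>j. k+j) ` compl n m h \<subseteq> compl (k+n) (k+m) (inj_tens k n k (inj_id k) h)"
      unfolding compl_def im by auto
  qed
qed

lemma compl_L2:
  assumes "bij_betw \<tau> {..<l} {..<l}" "A ` {..<p} \<subseteq> {..<l}"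
  shows "compl p l (inj_comp p \<tau> A) = \<tau> ` compl p l A"
proof -
  have "inj_comp p \<tau> A ` {..<p} = \<tau> ` (A ` {..<p})" by (auto simp: inj_comp_def image_image)
  moreover have "\<tau> ` {..<l} = {..<l}" "inj_on \<tau> {..<l}" using assms(1) by (auto simp: bij_betw_def)
  ultimately show ?thesis unfolding compl_def using inj_on_image_set_diff[of \<tau> "{..<l}" "{..<l}" "A ` {..<p}"] assms(2)
    by auto
qed


definition TJ :: "nat \<Rightarrow> nat \<Rightarrow> nat \<Rightarrow> nat \<Rightarrow> nat \<Rightarrow> nat \<Rightarrow> (nat \<Rightarrow> nat) \<Rightarrow> (nat \<Rightarrow> nat) \<Rightarrow> (nat \<Rightarrow> nat) \<Rightarrow> (nat \<Rightarrow> nat) \<Rightarrow> nat \<Rightarrow> nat" where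
  "TJ k1 k2 n1 l1 m1 m2 \<tau>1 \<tau>2 g1 \<rho> = (\<lambda>i. if i \<in> compl l1 l1 \<tau>1 then 0
      else if (\<exists>x. x \<in> compl (k1+n1) l1 (inj_tens k1 n1 k1 (inj_id k1) g1) \<and> \<tau>1 x = i)
      then \<tau>2 ((\<lambda>i. if i < k1 then 0 else if i - k1 \<in> compl n1 m1 g1 then k2 + \<rho> (i - k1) else 0)
                (THE x. x < l1 \<and> \<tau>1 x = i)) else 0)"

lemma J_key:
  "tmor Jcat (k1,k2) ((n1,n2),((k1+n1,k2+n2),(l1,l2),\<beta>1,\<beta>2,\<sigma>)) ((m1,m2),((l1,l2),(l1,l2),\<tau>1,\<tau>2,\<lambda>_. 0)) g \<longleftrightarrow>
   (\<exists>g1 g2 \<rho>. g = ((n1,n2),(m1,m2),g1,g2,\<rho>) \<and> g1 \<in> inj_maps n1 m1 \<and> g2 \<in> inj_maps n2 m2 \<and>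
      bij_betw \<rho> (compl n1 m1 g1) (compl n2 m2 g2) \<and> (\<forall>i. i \<notin> compl n1 m1 g1 \<longrightarrow> \<rho> i = 0) \<and>
      inj_comp (k1+n1) \<tau>1 (inj_tens k1 n1 k1 (inj_id k1) g1) = \<beta>1 \<and>
      inj_comp (k2+n2) \<tau>2 (inj_tens k2 n2 k2 (inj_id k2) g2) = \<beta>2 \<and>
      TJ k1 k2 n1 l1 m1 m2 \<tau>1 \<tau>2 g1 \<rho> = \<sigma>)"
  unfolding tmor_def Jcat_simps
  by (auto simp: Jcomp_eq Jtensm_eq TJ_def Jhom_iff)


lemma inj_maps_lt: "f \<in> inj_maps m n \<Longrightarrow> i < m \<Longrightarrow> f i < n"
  unfolding inj_maps_def by blast

lemma tens_range:
  assumes "h \<in> inj_maps n m" shows "inj_tens k n k (inj_id k) h ` {..<k+n} \<subseteq> {..<k+m}"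
proof
  fix y assume "y \<in> inj_tens k n k (inj_id k) h ` {..<k+n}"
  then obtain i where i: "i < k+n" "y = inj_tens k n k (inj_id k) h i" by auto
  show "y \<in> {..<k+m}"
  proof (cases "i < k")
    case True thus ?thesis using i by (simp add: inj_tens_def inj_id_def)
  next
    case False
    hence "h (i-k) < m" using i inj_maps_lt[OF assms, of "i-k"] by simp
    thus ?thesis using i False by (simp add: inj_tens_def)
  qed
qed

lemma bij_compl_empty: "bij_betw \<tau> {..<l} {..<l} \<Longrightarrow> compl l l \<tau> = {}"
  by (auto simp: compl_def bij_betw_def)

lemma phi_facts:
  assumes bt: "bij_betw \<tau> {..<l} {..<l}" and kl: "k \<le> l" and g: "g \<in> inj_maps n (l-k)"
    and b: "inj_comp (k+n) \<tau> (inj_tens k n k (inj_id k) g) = \<beta>"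
  shows "compl (k+n) l (inj_tens k n k (inj_id k) g) = (\<lambda>j. k+j) ` compl n (l-k) g"
    "bij_betw (\<lambda>j. \<tau> (k+j)) (compl n (l-k) g) (compl (k+n) l \<beta>)"
proof -
  have kk: "k + (l-k) = l" using kl by simp
  show cA: "compl (k+n) l (inj_tens k n k (inj_id k) g) = (\<lambda>j. k+j) ` compl n (l-k) g"
    using compl_L1[OF g, of k] kk by simp
  have r: "inj_tens k n k (inj_id k) g ` {..<k+n} \<subseteq> {..<l}" using tens_range[OF g, of k] kk by simp
  have cB: "compl (k+n) l \<beta> = (\<lambda>j. \<tau> (k+j)) ` compl n (l-k) g"
    using compl_L2[OF bt r] b cA by (simp add: image_image)
  have sub: "compl n (l-k) g \<subseteq> {..<l-k}" by (auto simp: compl_def)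
  have "inj_on (\<lambda>j. \<tau> (k+j)) (compl n (l-k) g)"
  proof (rule inj_onI)
    fix x y assume "x \<in> compl n (l-k) g" "y \<in> compl n (l-k) g" "\<tau> (k+x) = \<tau> (k+y)"
    moreover hence "k + x < l" "k + y < l" using sub by auto
    ultimately have "k+x = k+y" using bt unfolding bij_betw_def inj_on_def by blast
    thus "x = y" by simp
  qed
  thus "bij_betw (\<lambda>j. \<tau> (k+j)) (compl n (l-k) g) (compl (k+n) l \<beta>)" using cB by (simp add: bij_betw_def)
qed


lemma TJ_facts:
  assumes bt1: "bij_betw \<tau>1 {..<l1} {..<l1}" and kl1: "k1 \<le> l1"
    and g1: "g1 \<in> inj_maps n1 (l1-k1)"
    and b1: "inj_comp (k1+n1) \<tau>1 (inj_tens k1 n1 k1 (inj_id k1) g1) = \<beta>1"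
  shows "\<And>j. j \<in> compl n1 (l1-k1) g1 \<Longrightarrow> TJ k1 k2 n1 l1 (l1-k1) m2 \<tau>1 \<tau>2 g1 \<rho> (\<tau>1 (k1+j)) = \<tau>2 (k2 + \<rho> j)"
    "\<And>i. i \<notin> compl (k1+n1) l1 \<beta>1 \<Longrightarrow> TJ k1 k2 n1 l1 (l1-k1) m2 \<tau>1 \<tau>2 g1 \<rho> i = 0"
proof -
  note P = phi_facts[OF bt1 kl1 g1 b1]
  have ce: "compl l1 l1 \<tau>1 = {}" using bij_compl_empty[OF bt1] .
  have inj: "inj_on \<tau>1 {..<l1}" using bt1 by (simp add: bij_betw_def)
  fix j assume j: "j \<in> compl n1 (l1-k1) g1"
  have jl: "k1 + j < l1" using j kl1 by (auto simp: compl_def)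
  have ex: "\<exists>x. x \<in> compl (k1+n1) l1 (inj_tens k1 n1 k1 (inj_id k1) g1) \<and> \<tau>1 x = \<tau>1 (k1+j)"
    using P(1) j by blast
  have th: "(THE x. x < l1 \<and> \<tau>1 x = \<tau>1 (k1+j)) = k1 + j"
  proof (rule the_equality)
    show "k1 + j < l1 \<and> \<tau>1 (k1 + j) = \<tau>1 (k1 + j)" using jl by simp
    fix x assume "x < l1 \<and> \<tau>1 x = \<tau>1 (k1 + j)"
    thus "x = k1 + j" using inj jl unfolding inj_on_def by blast
  qed
  show "TJ k1 k2 n1 l1 (l1-k1) m2 \<tau>1 \<tau>2 g1 \<rho> (\<tau>1 (k1+j)) = \<tau>2 (k2 + \<rho> j)"
    unfolding TJ_def using ce ex th j by simp
next
  note P = phi_facts[OF bt1 kl1 g1 b1]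
  fix i assume i: "i \<notin> compl (k1+n1) l1 \<beta>1"
  have nex: "\<not> (\<exists>x. x \<in> compl (k1+n1) l1 (inj_tens k1 n1 k1 (inj_id k1) g1) \<and> \<tau>1 x = i)"
  proof
    assume "\<exists>x. x \<in> compl (k1+n1) l1 (inj_tens k1 n1 k1 (inj_id k1) g1) \<and> \<tau>1 x = i"
    then obtain j where "j \<in> compl n1 (l1-k1) g1" "\<tau>1 (k1+j) = i" using P(1) by auto
    thus False using i P(2) unfolding bij_betw_def by auto
  qed
  show "TJ k1 k2 n1 l1 (l1-k1) m2 \<tau>1 \<tau>2 g1 \<rho> i = 0" unfolding TJ_def by (simp only: if_not_P[OF nex] if_cancel)
qed

lemma J_term_morph:
  assumes bt1: "bij_betw \<tau>1 {..<l1} {..<l1}" and t10: "\<forall>i\<ge>l1. \<tau>1 i = 0" and kl1: "k1 \<le> l1"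
    and bt2: "bij_betw \<tau>2 {..<l2} {..<l2}" and t20: "\<forall>i\<ge>l2. \<tau>2 i = 0" and kl2: "k2 \<le> l2"
    and b1: "\<beta>1 \<in> inj_maps (k1+n1) l1" and b2: "\<beta>2 \<in> inj_maps (k2+n2) l2"
    and sb: "bij_betw \<sigma> (compl (k1+n1) l1 \<beta>1) (compl (k2+n2) l2 \<beta>2)"
    and s0: "\<forall>i. i \<notin> compl (k1+n1) l1 \<beta>1 \<longrightarrow> \<sigma> i = 0"
    and e1: "\<forall>i<k1. \<beta>1 i = \<tau>1 i" and e2: "\<forall>i<k2. \<beta>2 i = \<tau>2 i"
  shows "\<exists>!g. tmor Jcat (k1,k2) ((n1,n2),((k1+n1,k2+n2),(l1,l2),\<beta>1,\<beta>2,\<sigma>)) ((l1-k1,l2-k2),((l1,l2),(l1,l2),\<tau>1,\<tau>2,\<lambda>_. 0)) g"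
proof -
  obtain g1 where G1: "g1 \<in> inj_maps n1 (l1-k1)" "inj_comp (k1+n1) \<tau>1 (inj_tens k1 n1 k1 (inj_id k1) g1) = \<beta>1"
    and U1: "\<And>h. h \<in> inj_maps n1 (l1-k1) \<Longrightarrow> inj_comp (k1+n1) \<tau>1 (inj_tens k1 n1 k1 (inj_id k1) h) = \<beta>1 \<Longrightarrow> h = g1"
    using I_ext[OF bt1 t10 kl1 b1 e1] by blast
  obtain g2 where G2: "g2 \<in> inj_maps n2 (l2-k2)" "inj_comp (k2+n2) \<tau>2 (inj_tens k2 n2 k2 (inj_id k2) g2) = \<beta>2"
    and U2: "\<And>h. h \<in> inj_maps n2 (l2-k2) \<Longrightarrow> inj_comp (k2+n2) \<tau>2 (inj_tens k2 n2 k2 (inj_id k2) h) = \<beta>2 \<Longrightarrow> h = g2"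
    using I_ext[OF bt2 t20 kl2 b2 e2] by blast
  define C1 where "C1 = compl n1 (l1-k1) g1"
  define C2 where "C2 = compl n2 (l2-k2) g2"
  define \<phi>1 where "\<phi>1 = (\<lambda>j. \<tau>1 (k1+j))"
  define \<phi>2 where "\<phi>2 = (\<lambda>j. \<tau>2 (k2+j))"
  have P1: "bij_betw \<phi>1 C1 (compl (k1+n1) l1 \<beta>1)" using phi_facts(2)[OF bt1 kl1 G1] by (simp add: \<phi>1_def C1_def)
  have P2: "bij_betw \<phi>2 C2 (compl (k2+n2) l2 \<beta>2)" using phi_facts(2)[OF bt2 kl2 G2] by (simp add: \<phi>2_def C2_def)
  define \<rho> where "\<rho> j = (if j \<in> C1 then the_inv_into C2 \<phi>2 (\<sigma> (\<phi>1 j)) else 0)" for j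
  have "bij_betw (the_inv_into C2 \<phi>2 \<circ> \<sigma> \<circ> \<phi>1) C1 C2"
    by (intro bij_betw_trans[OF P1] bij_betw_trans[OF sb] bij_betw_the_inv_into[OF P2])
  hence rb: "bij_betw \<rho> C1 C2"
    by (rule bij_betw_cong[THEN iffD1, rotated]) (auto simp: \<rho>_def)
  have r0: "\<forall>i. i \<notin> C1 \<longrightarrow> \<rho> i = 0" by (simp add: \<rho>_def)
  note F1 = TJ_facts(1)[OF bt1 kl1 G1, folded C1_def, of _ k2 "l2-k2" \<tau>2]
  note F2 = TJ_facts(2)[OF bt1 kl1 G1, of _ k2 "l2-k2" \<tau>2]
  have T: "TJ k1 k2 n1 l1 (l1-k1) (l2-k2) \<tau>1 \<tau>2 g1 \<rho> = \<sigma>"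
  proof
    fix i show "TJ k1 k2 n1 l1 (l1-k1) (l2-k2) \<tau>1 \<tau>2 g1 \<rho> i = \<sigma> i"
    proof (cases "i \<in> compl (k1+n1) l1 \<beta>1")
      case True
      then obtain j where j: "j \<in> C1" "i = \<phi>1 j" using P1 unfolding bij_betw_def by auto
      have "\<sigma> i \<in> \<phi>2 ` C2" using sb P2 True unfolding bij_betw_def by auto
      hence "\<phi>2 (the_inv_into C2 \<phi>2 (\<sigma> i)) = \<sigma> i" using P2 by (simp add: bij_betw_def f_the_inv_into_f)
      thus ?thesis using F1[OF j(1), of \<rho>] j by (simp add: \<phi>1_def \<phi>2_def \<rho>_def)
    next
      case False thus ?thesis using F2[OF False] s0 by simp
    qed
  qed
  show ?thesis unfolding J_key
  proof (rule ex1I[where a="((n1,n2),(l1-k1,l2-k2),g1,g2,\<rho>)"])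
    show "\<exists>g1' g2' \<rho>'. ((n1,n2),(l1-k1,l2-k2),g1,g2,\<rho>) = ((n1,n2),(l1-k1,l2-k2),g1',g2',\<rho>') \<and> g1' \<in> inj_maps n1 (l1-k1) \<and> g2' \<in> inj_maps n2 (l2-k2) \<and>
      bij_betw \<rho>' (compl n1 (l1-k1) g1') (compl n2 (l2-k2) g2') \<and> (\<forall>i. i \<notin> compl n1 (l1-k1) g1' \<longrightarrow> \<rho>' i = 0) \<and>
      inj_comp (k1+n1) \<tau>1 (inj_tens k1 n1 k1 (inj_id k1) g1') = \<beta>1 \<and>
      inj_comp (k2+n2) \<tau>2 (inj_tens k2 n2 k2 (inj_id k2) g2') = \<beta>2 \<and>
      TJ k1 k2 n1 l1 (l1-k1) (l2-k2) \<tau>1 \<tau>2 g1' \<rho>' = \<sigma>"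
      using G1 G2 rb r0 T by (auto simp: C1_def C2_def)
  next
    fix g assume "\<exists>g1' g2' \<rho>'. g = ((n1,n2),(l1-k1,l2-k2),g1',g2',\<rho>') \<and> g1' \<in> inj_maps n1 (l1-k1) \<and> g2' \<in> inj_maps n2 (l2-k2) \<and>
      bij_betw \<rho>' (compl n1 (l1-k1) g1') (compl n2 (l2-k2) g2') \<and> (\<forall>i. i \<notin> compl n1 (l1-k1) g1' \<longrightarrow> \<rho>' i = 0) \<and>
      inj_comp (k1+n1) \<tau>1 (inj_tens k1 n1 k1 (inj_id k1) g1') = \<beta>1 \<and>
      inj_comp (k2+n2) \<tau>2 (inj_tens k2 n2 k2 (inj_id k2) g2') = \<beta>2 \<and>
      TJ k1 k2 n1 l1 (l1-k1) (l2-k2) \<tau>1 \<tau>2 g1' \<rho>' = \<sigma>"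
    then obtain g1' g2' \<rho>' where g: "g = ((n1,n2),(l1-k1,l2-k2),g1',g2',\<rho>')" "g1' \<in> inj_maps n1 (l1-k1)" "g2' \<in> inj_maps n2 (l2-k2)"
      "bij_betw \<rho>' (compl n1 (l1-k1) g1') (compl n2 (l2-k2) g2')" "\<forall>i. i \<notin> compl n1 (l1-k1) g1' \<longrightarrow> \<rho>' i = 0"
      "inj_comp (k1+n1) \<tau>1 (inj_tens k1 n1 k1 (inj_id k1) g1') = \<beta>1"
      "inj_comp (k2+n2) \<tau>2 (inj_tens k2 n2 k2 (inj_id k2) g2') = \<beta>2"
      "TJ k1 k2 n1 l1 (l1-k1) (l2-k2) \<tau>1 \<tau>2 g1' \<rho>' = \<sigma>" by blast
    have q1: "g1' = g1" using U1 g(2,6) by blast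
    have q2: "g2' = g2" using U2 g(3,7) by blast
    have "\<rho>' = \<rho>"
    proof
      fix j show "\<rho>' j = \<rho> j"
      proof (cases "j \<in> C1")
        case True
        have inC2: "\<rho>' j \<in> C2" using g(4) True q1 q2 unfolding C1_def C2_def bij_betw_def by auto
        have "\<phi>2 (\<rho>' j) = \<sigma> (\<phi>1 j)" using F1[OF True, of \<rho>'] g(8) q1 by (simp add: \<phi>1_def \<phi>2_def)
        hence "the_inv_into C2 \<phi>2 (\<sigma> (\<phi>1 j)) = \<rho>' j"
          using the_inv_into_f_f[of \<phi>2 C2 "\<rho>' j"] P2 inC2 by (simp add: bij_betw_def)
        thus ?thesis using True by (simp add: \<rho>_def)
      next
        case False thus ?thesis using g(5) q1 by (simp add: \<rho>_def C1_def)
      qed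
    qed
    thus "g = ((n1,n2),(l1-k1,l2-k2),g1,g2,\<rho>)" using g(1) q1 q2 by simp
  qed
qed


lemma restr_sub: assumes "f \<in> inj_maps (k+n) l" shows "inj_on f {..<k}" "f ` {..<k} \<subseteq> {..<l}"
proof -
  show "inj_on f {..<k}" using assms by (auto simp: inj_maps_def inj_on_def)
  show "f ` {..<k} \<subseteq> {..<l}"
  proof
    fix y assume "y \<in> f ` {..<k}"
    then obtain i where "i < k" "y = f i" by auto
    thus "y \<in> {..<l}" using inj_maps_lt[OF assms, of i] by simp
  qed
qed

lemma termJ: "components_terminal Jcat k l"
proof -
  obtain k1 k2 l1 l2 where kl: "k = (k1,k2)" "l = (l1,l2)" by (cases k; cases l)
  show ?thesis unfolding components_terminal_def kl
  proof
    fix x assume xin: "x \<in> tobj Jcat (k1,k2) (l1,l2)"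
    then obtain n1 n2 b1 b2 s where x: "x = ((n1,n2), ((k1+n1, k2+n2), (l1,l2), b1,b2,s))"
      "b1 \<in> inj_maps (k1+n1) l1" "b2 \<in> inj_maps (k2+n2) l2"
      unfolding tobjJ by blast
    have kl1: "k1 \<le> l1" using inj_maps_le[OF x(2)] by simp
    have kl2: "k2 \<le> l2" using inj_maps_le[OF x(3)] by simp
    obtain \<tau>1 where t1: "bij_betw \<tau>1 {..<l1} {..<l1}" "\<forall>i<k1. \<tau>1 i = b1 i" "\<forall>i. l1 \<le> i \<longrightarrow> \<tau>1 i = 0"
      using extend_bij[OF restr_sub[OF x(2)] kl1] by blast
    obtain \<tau>2 where t2: "bij_betw \<tau>2 {..<l2} {..<l2}" "\<forall>i<k2. \<tau>2 i = b2 i" "\<forall>i. l2 \<le> i \<longrightarrow> \<tau>2 i = 0"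
      using extend_bij[OF restr_sub[OF x(3)] kl2] by blast
    define t where "t = ((l1-k1,l2-k2),((l1,l2),(l1,l2),\<tau>1,\<tau>2,(\<lambda>_::nat. 0::nat)))"
    have tt: "t \<in> tobj Jcat (k1,k2) (l1,l2)"
    proof -
      have "\<tau>1 \<in> inj_maps (k1+(l1-k1)) l1" using bij_inj_maps[OF t1(1)] t1(3) kl1 by simp
      moreover have "\<tau>2 \<in> inj_maps (k2+(l2-k2)) l2" using bij_inj_maps[OF t2(1)] t2(3) kl2 by simp
      moreover have "compl (k1+(l1-k1)) l1 \<tau>1 = {}" "compl (k2+(l2-k2)) l2 \<tau>2 = {}"
        using bij_compl_empty[OF t1(1)] bij_compl_empty[OF t2(1)] kl1 kl2 by simp_all
      ultimately show ?thesis unfolding t_def tobjJ using kl1 kl2 by (auto simp: bij_betw_def)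
    qed
    have M: "\<exists>!g. tmor Jcat (k1,k2) y t g" if yin: "y \<in> tobj Jcat (k1,k2) (l1,l2)" and yr: "restrJ (k1,k2) y = restrJ (k1,k2) x" for y
    proof -
      obtain n1' n2' \<beta>1 \<beta>2 \<sigma> where y: "y = ((n1',n2'), ((k1+n1', k2+n2'), (l1,l2), \<beta>1,\<beta>2,\<sigma>))"
        "\<beta>1 \<in> inj_maps (k1+n1') l1" "\<beta>2 \<in> inj_maps (k2+n2') l2"
        "bij_betw \<sigma> (compl (k1+n1') l1 \<beta>1) (compl (k2+n2') l2 \<beta>2)" "\<forall>i. i \<notin> compl (k1+n1') l1 \<beta>1 \<longrightarrow> \<sigma> i = 0"
        using yin unfolding tobjJ by blast
      have rr: "(\<lambda>i. if i < k1 then \<beta>1 i else 0, \<lambda>i. if i < k2 then \<beta>2 i else 0) =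
                (\<lambda>i. if i < k1 then b1 i else 0, \<lambda>i. if i < k2 then b2 i else 0)"
        using yr unfolding x(1) y(1) by (simp add: restrJ_def)
      have e1: "\<forall>i<k1. \<beta>1 i = \<tau>1 i"
      proof (intro allI impI)
        fix i assume "i < k1" thus "\<beta>1 i = \<tau>1 i" using fun_cong[OF arg_cong[where f=fst, OF rr], of i] t1(2) by simp
      qed
      have e2: "\<forall>i<k2. \<beta>2 i = \<tau>2 i"
      proof (intro allI impI)
        fix i assume "i < k2" thus "\<beta>2 i = \<tau>2 i" using fun_cong[OF arg_cong[where f=snd, OF rr], of i] t2(2) by simp
      qed
      show ?thesis unfolding t_def y(1)
        using J_term_morph[OF t1(1) _ kl1 t2(1) _ kl2 y(2) y(3) y(4) y(5) e1 e2] t1(3) t2(3) by simp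
    qed
    have A: "tconn Jcat (k1,k2) (l1,l2) x t"
    proof -
      have "\<exists>!g. tmor Jcat (k1,k2) x t g" using M[OF xin] by simp
      then obtain g where "tmor Jcat (k1,k2) x t g" by (rule ex1E)
      thus ?thesis unfolding tconn_def using tt xin by (intro r_into_equivclp) blast
    qed
    have B: "\<forall>y\<in>tobj Jcat (k1,k2) (l1,l2). tconn Jcat (k1,k2) (l1,l2) x y \<longrightarrow> (\<exists>!g. tmor Jcat (k1,k2) y t g)"
    proof (intro ballI impI)
      fix y assume "y \<in> tobj Jcat (k1,k2) (l1,l2)" "tconn Jcat (k1,k2) (l1,l2) x y"
      thus "\<exists>!g. tmor Jcat (k1,k2) y t g" using M[of y] tconnJ_inv[of "(k1,k2)" "(l1,l2)" x y] by simp
    qed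
    show "\<exists>t\<in>tobj Jcat (k1,k2) (l1,l2). tconn Jcat (k1,k2) (l1,l2) x t \<and> (\<forall>y\<in>tobj Jcat (k1,k2) (l1,l2). tconn Jcat (k1,k2) (l1,l2) x y \<longrightarrow> (\<exists>!g. tmor Jcat (k1,k2) y t g))"
      using A B tt by (intro bexI[where x=t] conjI)
  qed
qed


lemma tpowJ: "tpow Jcat (k1,k2) n = (n*k1, n*k2)"
  by (induction n) auto

lemma tpowMJ: "(\<forall>i<n. fs i = ((k1,k2),(k1,k2),c i, d i, z i)) \<Longrightarrow>
   \<exists>S. tpowM Jcat fs n = ((n*k1,n*k2),(n*k1,n*k2), FI k1 c n, FI k2 d n, S)"
proof (induction n)
  case 0 thus ?case by (auto simp: FI_def inj_id_def)
next
  case (Suc n)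
  then obtain S where IH: "tpowM Jcat fs n = ((n*k1,n*k2),(n*k1,n*k2), FI k1 c n, FI k2 d n, S)" by auto
  have fn: "fs n = ((k1,k2),(k1,k2),c n, d n, z n)" using Suc.prems by auto
  show ?case using IH fn FI_Suc[of n k1 c] FI_Suc[of n k2 d] by (simp add: Jtensm_eq add.commute)
qed

lemma vwsJ:
  assumes k0: "0 < k1" and sp: "\<sigma> permutes {..<n}" and fh: "\<forall>i<n. fs i \<in> Jhom (k1,k2) (k1,k2)"
    and xt: "x \<in> tobj Jcat (tpow Jcat (k1,k2) n) l"
    and tc: "tconn Jcat (tpow Jcat (k1,k2) n) l x (tact Jcat (Comp Jcat (BlockPerm Jcat (k1,k2) n \<sigma>) (tpowM Jcat fs n)) x)"
  shows "\<sigma> = id \<and> (\<forall>i<n. fs i = Id Jcat (k1,k2))"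
proof -
  define c where "c i = fst (snd (snd (fs i)))" for i
  define d where "d i = fst (snd (snd (snd (fs i))))" for i
  define z where "z i = snd (snd (snd (snd (fs i))))" for i
  have fsi: "fs i = ((k1,k2),(k1,k2),c i, d i, z i) \<and> c i \<in> inj_maps k1 k1 \<and> d i \<in> inj_maps k2 k2 \<and> z i = (\<lambda>_. 0)"
    if iq: "i < n" for i
  proof -
    obtain b1 b2 s where f: "fs i = ((k1,k2),(k1,k2),b1,b2,s)" "b1 \<in> inj_maps k1 k1" "b2 \<in> inj_maps k2 k2"
      "\<forall>j. j \<notin> compl k1 k1 b1 \<longrightarrow> s j = 0"
      using fh[rule_format, OF iq] unfolding Jhom_iff by blast
    have "s = (\<lambda>_. 0)" using f(4) compl_empty[OF f(2)] by auto
    thus ?thesis using f by (simp add: c_def d_def z_def)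
  qed
  obtain S where tp: "tpowM Jcat fs n = ((n*k1,n*k2),(n*k1,n*k2), FI k1 c n, FI k2 d n, S)"
    using tpowMJ[of n fs k1 k2 c d z] fsi by (metis (no_types, lifting))
  define G1 where "G1 = inj_comp (n*k1) (block_perm k1 n \<sigma>) (FI k1 c n)"
  define G2 where "G2 = inj_comp (n*k2) (block_perm k2 n \<sigma>) (FI k2 d n)"
  obtain W where gam: "Comp Jcat (BlockPerm Jcat (k1,k2) n \<sigma>) (tpowM Jcat fs n) = ((n*k1,n*k2),(n*k1,n*k2),G1,G2,W)"
    unfolding tp by (simp add: Jcomp_eq G1_def G2_def)
  obtain l1 l2 where l: "l = (l1,l2)" by (cases l)
  obtain m1 m2 b1 b2 s where x: "x = ((m1,m2), ((n*k1+m1, n*k2+m2), (l1,l2), b1,b2,s))"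
      "b1 \<in> inj_maps (n*k1+m1) l1" "b2 \<in> inj_maps (n*k2+m2) l2"
    using xt unfolding l tpowJ tobjJ by blast
  have eq: "restrJ (n*k1,n*k2) x = restrJ (n*k1,n*k2) (tact Jcat ((n*k1,n*k2),(n*k1,n*k2),G1,G2,W) x)"
    using tconnJ_inv[OF tc[unfolded gam tpowJ]] .
  have e2: "restrJ (n*k1,n*k2) (tact Jcat ((n*k1,n*k2),(n*k1,n*k2),G1,G2,W) x) =
     (\<lambda>i. if i < n*k1 then b1 (G1 i) else 0, \<lambda>i. if i < n*k2 then b2 (G2 i) else 0)"
    unfolding x(1) by (rule tactJ)
  have e1: "restrJ (n*k1,n*k2) x = (\<lambda>i. if i < n*k1 then b1 i else 0, \<lambda>i. if i < n*k2 then b2 i else 0)"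
    unfolding x(1) by (simp add: restrJ_def)
  have q1: "\<forall>i<n*k1. b1 (G1 i) = b1 i"
  proof (intro allI impI)
    fix i assume "i < n*k1" thus "b1 (G1 i) = b1 i" using fun_cong[OF arg_cong[where f=fst, OF eq[unfolded e1 e2]], of i] by simp
  qed
  have q2: "\<forall>i<n*k2. b2 (G2 i) = b2 i"
  proof (intro allI impI)
    fix i assume "i < n*k2" thus "b2 (G2 i) = b2 i" using fun_cong[OF arg_cong[where f=snd, OF eq[unfolded e1 e2]], of i] by simp
  qed
  have ci: "\<forall>i<n. c i \<in> inj_maps k1 k1" "\<forall>i<n. d i \<in> inj_maps k2 k2" using fsi by auto
  have inj1: "inj_on b1 {..<n*k1+m1}" and inj2: "inj_on b2 {..<n*k2+m2}" using x(2,3) by (auto simp: inj_maps_def)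
  note C1 = blk_core[OF sp ci(1) inj1 q1[unfolded G1_def]]
  note C2 = blk_core[OF sp ci(2) inj2 q2[unfolded G2_def]]
  have "\<sigma> = id"
  proof
    fix q show "\<sigma> q = id q"
    proof (cases "q < n")
      case True thus ?thesis using C1[OF True k0] by simp
    next
      case False thus ?thesis using permutes_not_in[OF sp, of q] by simp
    qed
  qed
  moreover have "fs q = Id Jcat (k1,k2)" if "q < n" for q
  proof -
    have "c q = inj_id k1"
    proof
      fix r show "c q r = inj_id k1 r"
        using C1[OF that] fsi[OF that] by (cases "r < k1") (auto simp: inj_id_def inj_maps_def)
    qed
    moreover have "d q = inj_id k2"
    proof
      fix r show "d q r = inj_id k2 r"
        using C2[OF that] fsi[OF that] by (cases "r < k2") (auto simp: inj_id_def inj_maps_def)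
    qed
    ultimately show ?thesis using fsi[OF that] by simp
  qed
  ultimately show ?thesis by blast
qed


lemma partJ:
  "subcat_aut Jcat AO AM \<and> normal_sub Jcat AO AM \<and> multiplicative Jcat AO AM \<and> hocofinal Jcat AO \<longrightarrow>
   well_structured Jcat AO AM \<and> ((\<forall>k\<in>AO. 0 < Deg Jcat k) \<longrightarrow> very_well_structured Jcat AO AM)"
proof (intro impI)
  assume H: "subcat_aut Jcat AO AM \<and> normal_sub Jcat AO AM \<and> multiplicative Jcat AO AM \<and> hocofinal Jcat AO"
  hence sa: "subcat_aut Jcat AO AM" by blast
  have free: "free_on_components Jcat AO AM k l" for k l
    unfolding free_on_components_def
  proof (intro ballI impI)
    fix x \<gamma> assume a: "x \<in> tobj Jcat k l" "\<gamma> \<in> AM k" "tconn Jcat k l x (tact Jcat \<gamma> x)"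
    obtain k1 k2 where k: "k = (k1,k2)" by (cases k)
    have "\<gamma> \<in> Jhom (k1,k2) (k1,k2)" using AM_Hom[OF sa a(2)] k by simp
    thus "\<gamma> = Id Jcat k" using freeJ a k by blast
  qed
  have deg1: "\<forall>k\<in>Obj Jcat. \<forall>l\<in>Obj Jcat. Hom Jcat k l \<noteq> {} \<longrightarrow> Deg Jcat k \<le> Deg Jcat l"
    using degJ by simp
  have deg2: "\<forall>k\<in>Obj Jcat. \<forall>l\<in>Obj Jcat. Deg Jcat (Tens Jcat k l) = Deg Jcat k + Deg Jcat l"
    by (auto split: prod.splits)
  have iso: "\<forall>k\<in>Obj Jcat. \<forall>l\<in>Obj Jcat. \<forall>f\<in>Hom Jcat k l. is_iso Jcat k l f \<longleftrightarrow> Deg Jcat k = Deg Jcat l"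
    using isoJ by simp
  have WS: "well_structured Jcat AO AM"
    unfolding well_structured_def using H deg1 deg2 iso termJ free by simp
  moreover have "very_well_structured Jcat AO AM" if pos: "\<forall>k\<in>AO. 0 < Deg Jcat k"
    unfolding very_well_structured_def
  proof (rule conjI[OF WS], intro ballI allI impI)
    fix k l n \<sigma> fs x
    assume kA: "k \<in> AO" and n1: "1 \<le> n" and sf: "\<sigma> permutes {..<n} \<and> (\<forall>i<n. fs i \<in> AM k)"
      and xt: "x \<in> tobj Jcat (tpow Jcat k n) l"
      and tc: "tconn Jcat (tpow Jcat k n) l x (tact Jcat (Comp Jcat (BlockPerm Jcat k n \<sigma>) (tpowM Jcat fs n)) x)"
    obtain k1 k2 where k: "k = (k1,k2)" by (cases k)
    have k0: "0 < k1" using pos kA k by auto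
    have fh: "\<forall>i<n. fs i \<in> Jhom (k1,k2) (k1,k2)" using AM_Hom[OF sa] sf k by auto
    show "\<sigma> = id \<and> (\<forall>i<n. fs i = Id Jcat k)"
      using vwsJ[OF k0 _ fh] sf xt tc k by blast
  qed
  ultimately show "well_structured Jcat AO AM \<and> ((\<forall>k\<in>AO. 0 < Deg Jcat k) \<longrightarrow> very_well_structured Jcat AO AM)"
    by blast
qed

theorem proposition5p7:
  fixes AOI :: "nat set" and AMI :: "nat \<Rightarrow> Imor set"
    and AOJ :: "Jobj set" and AMJ :: "Jobj \<Rightarrow> Jmor set"
  shows "(subcat_aut Icat AOI AMI \<and> normal_sub Icat AOI AMI \<and> multiplicative Icat AOI AMI \<and>
            hocofinal Icat AOI \<longrightarrow>
          well_structured Icat AOI AMI \<and>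
          ((\<forall>k\<in>AOI. 0 < Deg Icat k) \<longrightarrow> very_well_structured Icat AOI AMI)) \<and>
         (subcat_aut Jcat AOJ AMJ \<and> normal_sub Jcat AOJ AMJ \<and> multiplicative Jcat AOJ AMJ \<and>
            hocofinal Jcat AOJ \<longrightarrow>
          well_structured Jcat AOJ AMJ \<and>
          ((\<forall>k\<in>AOJ. 0 < Deg Jcat k) \<longrightarrow> very_well_structured Jcat AOJ AMJ))"
  using partI[of AOI AMI] partJ[of AOJ AMJ] by blast

end
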